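(* Suppose $\lambda_0>1$. There exist positive constants $C,C'$ and an integer $N$, depending only on $T$, such that for every $k$ and every pair of admissible $(k+1)$-words $w_1,w_2$ with $d_1\ge N$ and $d_2\ge N$, the Perron–Frobenius eigenvalue $\lambda_1$ of $T_k\langle\{w_1,w_2\}\rangle$ satisfies $|\lambda_1-\lambda_0|\le C\lambda_0^{-k}\bigl(1+C'\lambda_0^{\delta}\bigr)$.
   Context: Let $\mathcal{A}$ be a finite alphabet of $r$ symbols and $T=(T_{x,y})$ an irreducible $r\times r$ matrix with entries in $\{0,1\}$ (the directed graph on $\mathcal{A}$ with an edge $x\to y$ iff $T_{y,x}=1$ is strongly connected), with Perron–Frobenius eigenvalue (spectral radius) $\lambda_0$. An admissible $k$-word is a string $a_1\cdots a_k$ with $T_{a_{i+1},a_i}=1$ for all $i$. $V_k$ is the complex vector space with basis $\{[w]\}$ indexed by admissible $k$-words; $\psi_k:V_1\to V_k$ is linear with $\psi_k([a])$ the sum of $[w]$ over admissible $k$-words beginning with $a$; $T_k:V_k\to V_k$ is linear with $T_k([a_1\cdots a_k])=\sum[a_2\cdots a_kx]$ over symbols $x$ with $a_2\cdots a_kx$ admissible. For a word $w$, $\beta w$, $\eta w$ are obtained by deleting the last, resp. first, symbol. For an admissible $(k+1)$-word $w$, $E_w:V_k\to V_k$ is linear with $E_w[\beta w]=[\eta w]$ and $E_w[u]=0$ for other admissible $k$-words $u$; for a set $\mathcal{C}$ of admissible $(k+1)$-words, $T_k\langle\mathcal{C}\rangle=T_k-\sum_{w\in\mathcal{C}}E_w$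 (a non-negative $0/1$ matrix in the word basis), whose Perron–Frobenius eigenvalue is its spectral radius. For an admissible $k$-word $u=u_1\cdots u_k$, $h(u)$ is the least non-negative integer $h$ such that $u$ is the only admissible $k$-word beginning with $u_1\cdots u_{h+1}$. For $w_1=a_0\cdots a_k$, $w_2=b_0\cdots b_k$: $d_1=h(a_1\cdots a_k)$, $h_2=h(b_1\cdots b_k)$; $W$ is the span of $\psi_k(V_1)$ and $T_k^i[a_1\cdots a_k]$, $0\le i\le d_1-1$; $d_2$ is the least non-negative integer with $T_k^{d_2}[b_1\cdots b_k]\in W$ (so $d_2\le h_2$); $\delta=h_2-d_2$. *)

theory Defs
  imports Complex_Main
begin

text \<open>Alphabet: the symbols 0..<r. The 0/1 matrix T is given as a boolean
  function, T x y meaning T_{x,y} = 1.\<close>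

definition irreducible01 :: "nat \<Rightarrow> (nat \<Rightarrow> nat \<Rightarrow> bool) \<Rightarrow> bool" where
  "irreducible01 r T \<longleftrightarrow>
     (\<forall>x<r. \<forall>y<r. (x, y) \<in> ({(a, b). a < r \<and> b < r \<and> T b a})\<^sup>*)"

definition is_eigenvalue :: "'i set \<Rightarrow> ('i \<Rightarrow> 'i \<Rightarrow> real) \<Rightarrow> complex \<Rightarrow> bool" where
  "is_eigenvalue S A l \<longleftrightarrow>
     (\<exists>v :: 'i \<Rightarrow> complex. (\<exists>i\<in>S. v i \<noteq> 0) \<and>
        (\<forall>i\<in>S. (\<Sum>j\<in>S. complex_of_real (A i j) * v j) = l * v i))"

definition spectral_radius_on :: "'i set \<Rightarrow> ('i \<Rightarrow> 'i \<Rightarrow> real) \<Rightarrow> real" where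
  "spectral_radius_on S A = Max {cmod l | l. is_eigenvalue S A l}"

definition PF_eigenvalue :: "nat \<Rightarrow> (nat \<Rightarrow> nat \<Rightarrow> bool) \<Rightarrow> real" where
  "PF_eigenvalue r T = spectral_radius_on {0..<r} (\<lambda>x y. if T x y then 1 else 0)"

definition admissible :: "nat \<Rightarrow> (nat \<Rightarrow> nat \<Rightarrow> bool) \<Rightarrow> nat \<Rightarrow> nat list \<Rightarrow> bool" where
  "admissible r T k w \<longleftrightarrow> length w = k \<and> (\<forall>a\<in>set w. a < r) \<and>
     (\<forall>i. Suc i < k \<longrightarrow> T (w ! Suc i) (w ! i))"

definition adm_words :: "nat \<Rightarrow> (nat \<Rightarrow> nat \<Rightarrow> bool) \<Rightarrow> nat \<Rightarrow> nat list set" where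
  "adm_words r T k = {w. admissible r T k w}"

text \<open>Vectors of V_k are functions on words supported on admissible k-words.
  Basis vector [u]:\<close>

definition basis_vec :: "nat list \<Rightarrow> nat list \<Rightarrow> complex" where
  "basis_vec u = (\<lambda>w. if w = u then 1 else 0)"

definition psi :: "nat \<Rightarrow> (nat \<Rightarrow> nat \<Rightarrow> bool) \<Rightarrow> nat \<Rightarrow> nat \<Rightarrow> nat list \<Rightarrow> complex" where
  "psi r T k a = (\<lambda>w. if admissible r T k w \<and> hd w = a then 1 else 0)"

text \<open>Matrix of T_k<C> in the word basis: entry (v,u) is the coefficient of [v]
  in T_k<C>[u]. T_k[u] = sum of [tl u @ [x]], and E_w with beta w = u,
  eta w = v removes exactly the word w = u @ [last v].\<close>

definition Tk_mat :: "nat \<Rightarrow> (nat \<Rightarrow> nat \<Rightarrow> bool) \<Rightarrow> nat \<Rightarrow> nat list set \<Rightarrow>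
                       nat list \<Rightarrow> nat list \<Rightarrow> real" where
  "Tk_mat r T k C v u =
     (if admissible r T k u \<and> admissible r T k v \<and> tl u = butlast v
         \<and> u @ [last v] \<notin> C then 1 else 0)"

definition Tk_op :: "nat \<Rightarrow> (nat \<Rightarrow> nat \<Rightarrow> bool) \<Rightarrow> nat \<Rightarrow>
                      (nat list \<Rightarrow> complex) \<Rightarrow> nat list \<Rightarrow> complex" where
  "Tk_op r T k f = (\<lambda>v. \<Sum>u\<in>adm_words r T k. complex_of_real (Tk_mat r T k {} v u) * f u)"

definition hh :: "nat \<Rightarrow> (nat \<Rightarrow> nat \<Rightarrow> bool) \<Rightarrow> nat \<Rightarrow> nat list \<Rightarrow> nat" where
  "hh r T k u = (LEAST h. \<forall>v. admissible r T k v \<and> take (Suc h) v = take (Suc h) u \<longrightarrow> v = u)"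

text \<open>W = span of psi_k(V_1) and T_k^i [a_1...a_k], 0 <= i <= d_1 - 1
  (complex linear span, written out).\<close>

definition W_space :: "nat \<Rightarrow> (nat \<Rightarrow> nat \<Rightarrow> bool) \<Rightarrow> nat \<Rightarrow> nat list \<Rightarrow>
                        (nat list \<Rightarrow> complex) set" where
  "W_space r T k w1 =
     {f. \<exists>c e :: nat \<Rightarrow> complex.
          f = (\<lambda>x. (\<Sum>a<r. c a * psi r T k a x)
                 + (\<Sum>i<hh r T k (tl w1). e i * ((Tk_op r T k ^^ i) (basis_vec (tl w1)) x)))}"

definition d1 :: "nat \<Rightarrow> (nat \<Rightarrow> nat \<Rightarrow> bool) \<Rightarrow> nat \<Rightarrow> nat list \<Rightarrow> nat" where
  "d1 r T k w1 = hh r T k (tl w1)"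

definition d2 :: "nat \<Rightarrow> (nat \<Rightarrow> nat \<Rightarrow> bool) \<Rightarrow> nat \<Rightarrow> nat list \<Rightarrow> nat list \<Rightarrow> nat" where
  "d2 r T k w1 w2 =
     (LEAST d. (Tk_op r T k ^^ d) (basis_vec (tl w2)) \<in> W_space r T k w1)"

definition delta :: "nat \<Rightarrow> (nat \<Rightarrow> nat \<Rightarrow> bool) \<Rightarrow> nat \<Rightarrow> nat list \<Rightarrow> nat list \<Rightarrow> nat" where
  "delta r T k w1 w2 = hh r T k (tl w2) - d2 r T k w1 w2"

end

theory Submission
  imports Defs "Jordan_Normal_Form.Spectral_Radius"
begin


definition Bmat :: "nat \<Rightarrow> (nat \<Rightarrow> 'i) \<Rightarrow> ('i \<Rightarrow> 'i \<Rightarrow> real) \<Rightarrow> complex mat" where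
  "Bmat n g A = mat n n (\<lambda>(i,j). complex_of_real (A (g i) (g j)))"

lemma Bmat_carrier: "Bmat n g A \<in> carrier_mat n n"
  by (simp add: Bmat_def)

lemma eig_iff:
  assumes g: "bij_betw g {0..<n} S"
  shows "is_eigenvalue S A l \<longleftrightarrow> eigenvalue (Bmat n g A) l"
proof
  assume "is_eigenvalue S A l"
  then obtain v where v1: "\<exists>i\<in>S. v i \<noteq> 0"
    and v2: "\<forall>i\<in>S. (\<Sum>j\<in>S. complex_of_real (A i j) * v j) = l * v i"
    unfolding is_eigenvalue_def by blast
  define w where "w = vec n (\<lambda>i. v (g i))"
  have gS: "\<And>j. j < n \<Longrightarrow> g j \<in> S" using g by (auto simp: bij_betw_def)
  have "w \<noteq> 0\<^sub>v n"
  proof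
    assume w0: "w = 0\<^sub>v n"
    from v1 obtain i where i: "i \<in> S" "v i \<noteq> 0" by blast
    then obtain j where j: "j < n" "g j = i" using g by (auto simp: bij_betw_def)
    have "w $ j = 0" using w0 j by simp
    thus False using i j by (simp add: w_def)
  qed
  moreover have "Bmat n g A *\<^sub>v w = l \<cdot>\<^sub>v w"
  proof (rule eq_vecI)
    fix j assume j: "j < dim_vec (l \<cdot>\<^sub>v w)"
    hence jn: "j < n" by (simp add: w_def)
    have "(Bmat n g A *\<^sub>v w) $ j = (\<Sum>t\<in>{0..<n}. complex_of_real (A (g j) (g t)) * v (g t))"
      using jn by (simp add: Bmat_def scalar_prod_def w_def)
    also have "\<dots> = (\<Sum>u\<in>S. complex_of_real (A (g j) u) * v u)"
      by (rule sum.reindex_bij_betw[OF g])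
    also have "\<dots> = l * v (g j)" using v2 gS[OF jn] by blast
    also have "\<dots> = (l \<cdot>\<^sub>v w) $ j" using jn by (simp add: w_def)
    finally show "(Bmat n g A *\<^sub>v w) $ j = (l \<cdot>\<^sub>v w) $ j" .
  qed (simp add: Bmat_def w_def)
  ultimately show "eigenvalue (Bmat n g A) l"
    unfolding eigenvalue_def eigenvector_def by (intro exI[of _ w]) (simp add: Bmat_def w_def)
next
  assume "eigenvalue (Bmat n g A) l"
  then obtain w where w: "w \<in> carrier_vec n" "w \<noteq> 0\<^sub>v n" "Bmat n g A *\<^sub>v w = l \<cdot>\<^sub>v w"
    unfolding eigenvalue_def eigenvector_def by (auto simp: Bmat_def)
  define gi where "gi = the_inv_into {0..<n} g"
  have gi: "\<And>j. j < n \<Longrightarrow> gi (g j) = j" unfolding gi_def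
    using g by (auto simp: bij_betw_def the_inv_into_f_f)
  have gS: "\<And>j. j < n \<Longrightarrow> g j \<in> S" using g by (auto simp: bij_betw_def)
  have Sg: "\<And>u. u \<in> S \<Longrightarrow> \<exists>j<n. g j = u" using g by (auto simp: bij_betw_def)
  define v where "v u = w $ (gi u)" for u
  have vg: "\<And>j. j < n \<Longrightarrow> v (g j) = w $ j" by (simp add: v_def gi)
  have "\<exists>i\<in>S. v i \<noteq> 0"
  proof (rule ccontr)
    assume "\<not> ?thesis"
    hence "\<And>j. j < n \<Longrightarrow> w $ j = 0" using gS vg by force
    hence "w = 0\<^sub>v n" using w(1) by (intro eq_vecI) auto
    thus False using w(2) by simp
  qed
  moreover have "\<forall>i\<in>S. (\<Sum>j\<in>S. complex_of_real (A i j) * v j) = l * v i"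
  proof
    fix i assume "i \<in> S"
    then obtain j where j: "j < n" "g j = i" using Sg by blast
    have "(\<Sum>u\<in>S. complex_of_real (A i u) * v u) = (\<Sum>t\<in>{0..<n}. complex_of_real (A (g j) (g t)) * v (g t))"
      using j by (simp add: sum.reindex_bij_betw[OF g, where g="\<lambda>u. complex_of_real (A i u) * v u"])
    also have "\<dots> = (\<Sum>t\<in>{0..<n}. complex_of_real (A (g j) (g t)) * w $ t)"
      by (rule sum.cong) (auto simp: vg)
    also have "\<dots> = (Bmat n g A *\<^sub>v w) $ j"
      using j w(1) by (simp add: Bmat_def scalar_prod_def)
    also have "\<dots> = l * v i" using w(3) j w(1) vg[of j] by simp
    finally show "(\<Sum>u\<in>S. complex_of_real (A i u) * v u) = l * v i" .
  qed
  ultimately show "is_eigenvalue S A l" unfolding is_eigenvalue_def by blast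
qed

lemma eig_finite:
  assumes "finite S"
  shows "finite {l. is_eigenvalue S A l}"
proof -
  obtain g where g: "bij_betw g {0..<card S} S" using ex_bij_betw_nat_finite[OF assms] by blast
  have "{l. is_eigenvalue S A l} = spectrum (Bmat (card S) g A)"
    using eig_iff[OF g] by (auto simp: spectrum_def)
  thus ?thesis using card_finite_spectrum(1)[OF Bmat_carrier] by simp
qed

lemma eig_nonempty:
  assumes "finite S" "S \<noteq> {}"
  shows "\<exists>l. is_eigenvalue S A l"
proof -
  obtain g where g: "bij_betw g {0..<card S} S" using ex_bij_betw_nat_finite[OF assms(1)] by blast
  have "{l. is_eigenvalue S A l} = spectrum (Bmat (card S) g A)"
    using eig_iff[OF g] by (auto simp: spectrum_def)
  moreover have "card S > 0" using assms by (simp add: card_gt_0_iff)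
  ultimately have "spectrum (Bmat (card S) g A) \<noteq> {}" using spectrum_non_empty[OF Bmat_carrier] by blast
  with \<open>{l. is_eigenvalue S A l} = _\<close> show ?thesis by auto
qed

lemma SR_set_eq: "{cmod l | l. is_eigenvalue S A l} = cmod ` {l. is_eigenvalue S A l}"
  by auto

lemma SR_ge:
  assumes "finite S" "is_eigenvalue S A l"
  shows "cmod l \<le> spectral_radius_on S A"
  unfolding spectral_radius_on_def SR_set_eq
  using assms eig_finite[OF assms(1)] by (intro Max_ge) auto

lemma SR_attained:
  assumes "finite S" "S \<noteq> {}"
  shows "\<exists>l. is_eigenvalue S A l \<and> cmod l = spectral_radius_on S A"
proof -
  have "spectral_radius_on S A \<in> cmod ` {l. is_eigenvalue S A l}"
    unfolding spectral_radius_on_def SR_set_eq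
    using eig_finite[OF assms(1)] eig_nonempty[OF assms] by (intro Max_in) auto
  thus ?thesis by auto
qed

lemma SR_le:
  assumes "finite S" "S \<noteq> {}" "\<And>l. is_eigenvalue S A l \<Longrightarrow> cmod l \<le> c"
  shows "spectral_radius_on S A \<le> c"
  using SR_attained[OF assms(1,2), of A] assms(3) by metis



fun mpow :: "'i set \<Rightarrow> ('i \<Rightarrow> 'i \<Rightarrow> real) \<Rightarrow> nat \<Rightarrow> 'i \<Rightarrow> 'i \<Rightarrow> real" where
  "mpow S A 0 i j = (if i = j then 1 else 0)"
| "mpow S A (Suc k) i j = (\<Sum>l\<in>S. mpow S A k i l * A l j)"

lemma Bmat_pow:
  assumes g: "bij_betw g {0..<n} S"
  shows "Bmat n g A ^\<^sub>m k = Bmat n g (mpow S A k)"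
proof (induction k)
  case 0
  have inj: "\<And>i j. i < n \<Longrightarrow> j < n \<Longrightarrow> g i = g j \<longleftrightarrow> i = j"
    using g by (auto simp: bij_betw_def inj_on_def)
  show ?case
    by (rule eq_matI) (auto simp: Bmat_def inj)
next
  case (Suc k)
  have "Bmat n g A ^\<^sub>m Suc k = Bmat n g (mpow S A k) * Bmat n g A"
    using Suc by simp
  also have "\<dots> = Bmat n g (mpow S A (Suc k))"
  proof (rule eq_matI)
    fix i j assume ij: "i < dim_row (Bmat n g (mpow S A (Suc k)))" "j < dim_col (Bmat n g (mpow S A (Suc k)))"
    hence i: "i < n" and j: "j < n" by (auto simp: Bmat_def)
    have "(Bmat n g (mpow S A k) * Bmat n g A) $$ (i, j)
        = (\<Sum>t\<in>{0..<n}. complex_of_real (mpow S A k (g i) (g t)) * complex_of_real (A (g t) (g j)))"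
      using i j by (simp add: Bmat_def scalar_prod_def)
    also have "\<dots> = complex_of_real (\<Sum>t\<in>{0..<n}. mpow S A k (g i) (g t) * A (g t) (g j))"
      by simp
    also have "(\<Sum>t\<in>{0..<n}. mpow S A k (g i) (g t) * A (g t) (g j)) = (\<Sum>l\<in>S. mpow S A k (g i) l * A l (g j))"
      by (rule sum.reindex_bij_betw[OF g])
    finally show "(Bmat n g (mpow S A k) * Bmat n g A) $$ (i, j) = Bmat n g (mpow S A (Suc k)) $$ (i, j)"
      using i j by (simp add: Bmat_def)
  qed (auto simp: Bmat_def)
  finally show ?case .
qed

lemma mpow_nonneg:
  assumes "\<And>i j. i \<in> S \<Longrightarrow> j \<in> S \<Longrightarrow> A i j \<ge> 0" "i \<in> S" "j \<in> S"
  shows "mpow S A k i j \<ge> 0"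
  using assms(2,3)
proof (induction k arbitrary: j)
  case (Suc k)
  thus ?case using assms(1) by (auto intro!: sum_nonneg)
qed simp

lemma mpow_grow:
  assumes fin: "finite S"
    and A0: "\<And>i j. i \<in> S \<Longrightarrow> j \<in> S \<Longrightarrow> A i j \<ge> 0"
    and x0: "\<And>i. i \<in> S \<Longrightarrow> x i \<ge> 0"
    and t0: "t \<ge> 0"
    and Ax: "\<And>i. i \<in> S \<Longrightarrow> (\<Sum>j\<in>S. A i j * x j) \<ge> t * x i"
    and i: "i \<in> S"
  shows "(\<Sum>j\<in>S. mpow S A k i j * x j) \<ge> t ^ k * x i"
proof (induction k)
  case 0
  have "(\<Sum>j\<in>S. mpow S A 0 i j * x j) = (\<Sum>j\<in>S. if j = i then x j else 0)"
    by (rule sum.cong) auto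
  also have "\<dots> = x i" using fin i by simp
  finally show ?case by simp
next
  case (Suc k)
  have "(\<Sum>j\<in>S. mpow S A (Suc k) i j * x j) = (\<Sum>j\<in>S. \<Sum>l\<in>S. mpow S A k i l * A l j * x j)"
    by (simp add: sum_distrib_right)
  also have "\<dots> = (\<Sum>l\<in>S. \<Sum>j\<in>S. mpow S A k i l * A l j * x j)"
    by (rule sum.swap)
  also have "\<dots> = (\<Sum>l\<in>S. mpow S A k i l * (\<Sum>j\<in>S. A l j * x j))"
    by (simp add: sum_distrib_left mult.assoc)
  also have "\<dots> \<ge> (\<Sum>l\<in>S. mpow S A k i l * (t * x l))"
    by (intro sum_mono mult_left_mono Ax mpow_nonneg[OF A0] i) auto
  finally have "(\<Sum>j\<in>S. mpow S A (Suc k) i j * x j) \<ge> t * (\<Sum>l\<in>S. mpow S A k i l * x l)"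
    by (simp add: sum_distrib_left algebra_simps)
  moreover have "t * (\<Sum>l\<in>S. mpow S A k i l * x l) \<ge> t * (t ^ k * x i)"
    using Suc t0 by (rule mult_left_mono)
  ultimately show ?case by simp
qed

lemma SR_nonneg:
  assumes "finite S" "S \<noteq> {}"
  shows "spectral_radius_on S A \<ge> 0"
  using SR_attained[OF assms, of A] by (metis norm_ge_zero)

lemma SR_lower:
  assumes fin: "finite S"
    and A0: "\<And>i j. i \<in> S \<Longrightarrow> j \<in> S \<Longrightarrow> A i j \<ge> 0"
    and x0: "\<And>i. i \<in> S \<Longrightarrow> x i \<ge> 0"
    and v0: "v0 \<in> S" "x v0 > 0"
    and s0: "s > 0"
    and Ax: "\<And>i. i \<in> S \<Longrightarrow> (\<Sum>j\<in>S. A i j * x j) \<ge> s * x i"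
  shows "spectral_radius_on S A \<ge> s"
proof (rule ccontr)
  assume "\<not> ?thesis"
  hence lt: "spectral_radius_on S A < s" by simp
  have Sne: "S \<noteq> {}" using v0 by auto
  define s' where "s' = (spectral_radius_on S A + s) / 2"
  have s'1: "spectral_radius_on S A < s'" "s' < s" using lt unfolding s'_def by auto
  have s'0: "s' > 0" using SR_nonneg[OF fin Sne, of A] s'1 by linarith
  define A' where "A' i j = A i j / s'" for i j
  have eigA': "cmod l < 1" if "is_eigenvalue S A' l" for l
  proof -
    from that obtain v where v1: "\<exists>i\<in>S. v i \<noteq> 0"
      and v2: "\<forall>i\<in>S. (\<Sum>j\<in>S. complex_of_real (A' i j) * v j) = l * v i"
      unfolding is_eigenvalue_def by blast
    have "is_eigenvalue S A (complex_of_real s' * l)"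
      unfolding is_eigenvalue_def
    proof (intro exI[of _ v] conjI v1 ballI)
      fix i assume i: "i \<in> S"
      have "(\<Sum>j\<in>S. complex_of_real (A i j) * v j) = complex_of_real s' * (\<Sum>j\<in>S. complex_of_real (A' i j) * v j)"
        using s'0 by (simp add: A'_def sum_distrib_left field_simps)
      also have "\<dots> = complex_of_real s' * l * v i" using v2 i by simp
      finally show "(\<Sum>j\<in>S. complex_of_real (A i j) * v j) = complex_of_real s' * l * v i" .
    qed
    from SR_ge[OF fin this] have "s' * cmod l \<le> spectral_radius_on S A"
      using s'0 by (simp add: norm_mult)
    hence "s' * cmod l < s' * 1" using s'1 by simp
    thus ?thesis using s'0 by simp
  qed
  obtain g where g: "bij_betw g {0..<card S} S" using ex_bij_betw_nat_finite[OF fin] by blast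
  let ?n = "card S"
  let ?B = "Bmat ?n g A'"
  have spec: "spectrum ?B = {l. is_eigenvalue S A' l}"
    using eig_iff[OF g] by (auto simp: spectrum_def)
  have n0: "?n > 0" using fin Sne by (simp add: card_gt_0_iff)
  have "spectral_radius ?B \<in> norm ` spectrum ?B"
    by (rule spectral_radius_mem_max(1)[OF Bmat_carrier n0])
  hence "spectral_radius ?B < 1" using eigA' spec by auto
  from spectral_radius_jnf_norm_bound_less_1_upper_triangular[OF Bmat_carrier this]
  obtain c where c: "\<And>k. norm_bound (?B ^\<^sub>m k) c" by blast
  have bnd: "\<bar>mpow S A' k i j\<bar> \<le> c" if ij: "i \<in> S" "j \<in> S" for k i j
  proof -
    obtain a where a: "a < ?n" "g a = i" using g ij unfolding bij_betw_def by force
    obtain b where b: "b < ?n" "g b = j" using g ij unfolding bij_betw_def by force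
    have "norm ((?B ^\<^sub>m k) $$ (a, b)) \<le> c"
      using c[of k] a b unfolding norm_bound_def Bmat_pow[OF g] by (auto simp: Bmat_def)
    thus ?thesis unfolding Bmat_pow[OF g] using a b by (simp add: Bmat_def)
  qed
  have A'0: "\<And>i j. i \<in> S \<Longrightarrow> j \<in> S \<Longrightarrow> A' i j \<ge> 0" using A0 s'0 by (simp add: A'_def)
  define t where "t = s / s'"
  have t1: "t > 1" using s'1 s'0 by (simp add: t_def)
  have A'x: "(\<Sum>j\<in>S. A' i j * x j) \<ge> t * x i" if "i \<in> S" for i
  proof -
    have "(\<Sum>j\<in>S. A' i j * x j) = (\<Sum>j\<in>S. A i j * x j) / s'"
      by (simp add: A'_def sum_divide_distrib)
    also have "\<dots> \<ge> s * x i / s'" using Ax[OF that] s'0 by (simp add: divide_right_mono)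
    finally show ?thesis by (simp add: t_def)
  qed
  define X where "X = (\<Sum>j\<in>S. x j)"
  obtain k where k: "c * X / x v0 < t ^ k" using real_arch_pow[OF t1] by blast
  have "t ^ k * x v0 \<le> (\<Sum>j\<in>S. mpow S A' k v0 j * x j)"
    by (rule mpow_grow[OF fin A'0 x0 _ A'x v0(1)]) (use t1 in auto)
  also have "\<dots> \<le> (\<Sum>j\<in>S. c * x j)"
  proof (rule sum_mono)
    fix j assume j: "j \<in> S"
    have "mpow S A' k v0 j \<le> c" using bnd[OF v0(1) j, of k] by simp
    thus "mpow S A' k v0 j * x j \<le> c * x j" using x0[OF j] by (rule mult_right_mono)
  qed
  also have "\<dots> = c * X" by (simp add: X_def sum_distrib_left)
  finally have "t ^ k * x v0 \<le> c * X" .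
  moreover have "c * X < t ^ k * x v0" using k v0(2) by (simp add: divide_less_eq)
  ultimately show False by simp
qed



lemma eig_transpose:
  assumes "finite S"
  shows "is_eigenvalue S (\<lambda>i j. A j i) l \<longleftrightarrow> is_eigenvalue S A l"
proof -
  obtain g where g: "bij_betw g {0..<card S} S" using ex_bij_betw_nat_finite[OF assms] by blast
  have tr: "Bmat (card S) g (\<lambda>i j. A j i) = transpose_mat (Bmat (card S) g A)"
    by (rule eq_matI) (auto simp: Bmat_def)
  show ?thesis
    unfolding eig_iff[OF g] tr
    unfolding eigenvalue_root_char_poly[OF Bmat_carrier]
       eigenvalue_root_char_poly[OF transpose_carrier_mat[THEN iffD2, OF Bmat_carrier]]
    by (simp add: char_poly_transpose_mat[OF Bmat_carrier])
qed

lemma SR_transpose: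
  assumes "finite S"
  shows "spectral_radius_on S (\<lambda>i j. A j i) = spectral_radius_on S A"
  unfolding spectral_radius_on_def using eig_transpose[OF assms, of A] by presburger

definition vapp :: "'i set \<Rightarrow> ('i \<Rightarrow> 'i \<Rightarrow> real) \<Rightarrow> ('i \<Rightarrow> real) \<Rightarrow> 'i \<Rightarrow> real" where
  "vapp S A x = (\<lambda>i. \<Sum>j\<in>S. A i j * x j)"

definition irr :: "'i set \<Rightarrow> ('i \<Rightarrow> 'i \<Rightarrow> real) \<Rightarrow> bool" where
  "irr S A \<longleftrightarrow> (\<forall>Q. Q \<subseteq> S \<and> Q \<noteq> {} \<and> (\<forall>i\<in>Q. \<forall>j\<in>S. A j i > 0 \<longrightarrow> j \<in> Q) \<longrightarrow> Q = S)"

lemma vapp_cong: "(\<And>j. j \<in> S \<Longrightarrow> x j = y j) \<Longrightarrow> vapp S A x i = vapp S A y i"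
  unfolding vapp_def by (rule sum.cong) auto

lemma vapp_lin: "vapp S A (\<lambda>i. c * x i + y i) i = c * vapp S A x i + vapp S A y i"
  unfolding vapp_def by (simp add: algebra_simps sum.distrib sum_distrib_left)

lemma vapp_nonneg:
  assumes "\<And>i j. i \<in> S \<Longrightarrow> j \<in> S \<Longrightarrow> A i j \<ge> 0" "\<And>j. j \<in> S \<Longrightarrow> x j \<ge> 0" "i \<in> S"
  shows "vapp S A x i \<ge> 0"
  unfolding vapp_def using assms by (auto intro!: sum_nonneg)

lemma vapp_ge_term:
  assumes fin: "finite S" and "\<And>i j. i \<in> S \<Longrightarrow> j \<in> S \<Longrightarrow> A i j \<ge> 0" "\<And>j. j \<in> S \<Longrightarrow> x j \<ge> 0" "i \<in> S" "j \<in> S"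
  shows "vapp S A x i \<ge> A i j * x j"
  unfolding vapp_def using assms by (intro member_le_sum) auto

lemma vapp_pow_nonneg:
  assumes "\<And>i j. i \<in> S \<Longrightarrow> j \<in> S \<Longrightarrow> A i j \<ge> 0" "\<And>j. j \<in> S \<Longrightarrow> x j \<ge> 0" "i \<in> S"
  shows "(vapp S A ^^ m) x i \<ge> 0"
  using assms(3)
proof (induction m arbitrary: i)
  case 0 thus ?case using assms(2) by simp
next
  case (Suc m) thus ?case using assms(1) by (simp add: vapp_nonneg)
qed

lemma PF_generic:
  assumes fin: "finite S" and Sne: "S \<noteq> {}"
    and A0: "\<And>i j. i \<in> S \<Longrightarrow> j \<in> S \<Longrightarrow> A i j \<ge> 0"
    and irr: "irr S A"
    and rho0: "spectral_radius_on S A > 0"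
  shows "\<exists>x. (\<forall>i\<in>S. x i > 0) \<and> (\<forall>i\<in>S. vapp S A x i = spectral_radius_on S A * x i)"
proof -
  let ?\<rho> = "spectral_radius_on S A"
  obtain l where l: "is_eigenvalue S A l" "cmod l = ?\<rho>" using SR_attained[OF fin Sne] by blast
  then obtain v where v1: "\<exists>i\<in>S. v i \<noteq> 0"
    and v2: "\<forall>i\<in>S. (\<Sum>j\<in>S. complex_of_real (A i j) * v j) = l * v i"
    unfolding is_eigenvalue_def by blast
  define x0 where "x0 i = cmod (v i)" for i
  have x0nn: "\<And>i. x0 i \<ge> 0" by (simp add: x0_def)
  obtain i0 where i0: "i0 \<in> S" "x0 i0 > 0" using v1 by (auto simp: x0_def)
  have sub: "vapp S A x0 i \<ge> ?\<rho> * x0 i" if i: "i \<in> S" for i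
  proof -
    have "?\<rho> * x0 i = cmod (l * v i)" using l by (simp add: x0_def norm_mult)
    also have "\<dots> = cmod (\<Sum>j\<in>S. complex_of_real (A i j) * v j)" using v2 i by simp
    also have "\<dots> \<le> (\<Sum>j\<in>S. cmod (complex_of_real (A i j) * v j))" by (rule norm_sum)
    also have "\<dots> = vapp S A x0 i" unfolding vapp_def x0_def
      by (rule sum.cong) (auto simp: norm_mult A0 i)
    finally show ?thesis .
  qed
  define d where "d i = vapp S A x0 i - ?\<rho> * x0 i" for i
  have dnn: "\<And>i. i \<in> S \<Longrightarrow> d i \<ge> 0" using sub by (simp add: d_def)
  have eq: "\<forall>i\<in>S. d i = 0"
  proof (rule ccontr)
    assume "\<not> ?thesis"
    then obtain i1 where i1: "i1 \<in> S" "d i1 > 0" using dnn by force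
    define D where "D m = (vapp S A ^^ m) d" for m
    define X where "X m = (vapp S A ^^ m) x0" for m
    have Dnn: "\<And>m i. i \<in> S \<Longrightarrow> D m i \<ge> 0" unfolding D_def
      by (rule vapp_pow_nonneg[OF A0 dnn])
    have Xnn: "\<And>m i. i \<in> S \<Longrightarrow> X m i \<ge> 0" unfolding X_def
      by (rule vapp_pow_nonneg[OF A0 x0nn])
    have XS: "X (Suc m) = vapp S A (X m)" for m by (simp add: X_def)
    have DS: "D (Suc m) = vapp S A (D m)" for m by (simp add: D_def)
    have rec: "vapp S A (X m) i = ?\<rho> * X m i + D m i" if "i \<in> S" for m i
      using that
    proof (induction m arbitrary: i)
      case 0 thus ?case by (simp add: X_def D_def d_def)
    next
      case (Suc m)
      have "vapp S A (X (Suc m)) i = vapp S A (\<lambda>j. ?\<rho> * X m j + D m j) i"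
        by (rule vapp_cong) (simp only: XS Suc.IH)
      also have "\<dots> = ?\<rho> * X (Suc m) i + D (Suc m) i"
        by (simp only: vapp_lin XS DS)
      finally show ?case .
    qed
    define Q where "Q = {i\<in>S. \<exists>m. D m i > 0}"
    have "Q = S"
      using irr unfolding irr_def
    proof (elim allE impE)
      show "Q \<subseteq> S \<and> Q \<noteq> {} \<and> (\<forall>i\<in>Q. \<forall>j\<in>S. 0 < A j i \<longrightarrow> j \<in> Q)"
      proof (intro conjI ballI impI)
        show "Q \<subseteq> S" by (auto simp: Q_def)
        show "Q \<noteq> {}" using i1 by (auto simp: Q_def D_def intro!: exI[of _ 0])
        fix i j assume i: "i \<in> Q" and j: "j \<in> S" and Aji: "0 < A j i"
        from i obtain m where m: "i \<in> S" "D m i > 0" by (auto simp: Q_def)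
        have "D (Suc m) j \<ge> A j i * D m i"
          unfolding DS by (rule vapp_ge_term[OF fin A0 _ j m(1)]) (auto intro: Dnn)
        moreover have "A j i * D m i > 0" using Aji m by simp
        ultimately show "j \<in> Q" using j by (auto simp: Q_def intro!: exI[of _ "Suc m"])
      qed
    qed
    hence "\<forall>i\<in>S. \<exists>m. D m i > 0" by (auto simp: Q_def)
    then obtain mi where mi: "\<And>i. i \<in> S \<Longrightarrow> D (mi i) i > 0" by metis
    define N where "N = Max (mi ` S)"
    have miN: "\<And>i. i \<in> S \<Longrightarrow> mi i \<le> N" unfolding N_def using fin by auto
    define y where "y i = (\<Sum>m\<le>N. X m i)" for i
    define E where "E i = (\<Sum>m\<le>N. D m i)" for i
    have Epos: "E i > 0" if i: "i \<in> S" for i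
    proof -
      have "D (mi i) i \<le> E i" unfolding E_def
        using miN[OF i] Dnn[OF i] by (intro member_le_sum) auto
      thus ?thesis using mi[OF i] by simp
    qed
    have ynn: "\<And>i. i \<in> S \<Longrightarrow> y i \<ge> 0" unfolding y_def using Xnn by (auto intro!: sum_nonneg)
    have yi0: "y i0 > 0"
    proof -
      have "X 0 i0 \<le> y i0" unfolding y_def using Xnn[OF i0(1)] by (intro member_le_sum) auto
      thus ?thesis using i0 by (simp add: X_def)
    qed
    have vy: "vapp S A y i = ?\<rho> * y i + E i" if "i \<in> S" for i
    proof -
      have "vapp S A y i = (\<Sum>j\<in>S. \<Sum>m\<le>N. A i j * X m j)"
        unfolding vapp_def y_def by (simp add: sum_distrib_left)
      also have "\<dots> = (\<Sum>m\<le>N. \<Sum>j\<in>S. A i j * X m j)"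
        by (rule sum.swap)
      also have "\<dots> = (\<Sum>m\<le>N. vapp S A (X m) i)"
        unfolding vapp_def ..
      also have "\<dots> = (\<Sum>m\<le>N. ?\<rho> * X m i + D m i)" using rec[OF that] by simp
      also have "\<dots> = ?\<rho> * y i + E i" by (simp add: y_def E_def sum.distrib sum_distrib_left)
      finally show ?thesis .
    qed
    define emin where "emin = Min (E ` S)"
    define ymax where "ymax = Max (y ` S)"
    have emin: "emin > 0" unfolding emin_def using fin Sne Epos by (subst Min_gr_iff) auto
    have "y i0 \<le> ymax" unfolding ymax_def using fin i0(1) by auto
    hence ymax: "ymax > 0" using yi0 by linarith
    have "spectral_radius_on S A \<ge> ?\<rho> + emin / ymax"
    proof (rule SR_lower[where x=y, OF fin A0 ynn i0(1) yi0])
      have "emin / ymax > 0" using emin ymax by simp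
      thus "0 < ?\<rho> + emin / ymax" using rho0 by linarith
      fix i assume i: "i \<in> S"
      have "emin / ymax * y i \<le> emin"
      proof -
        have "y i \<le> ymax" unfolding ymax_def using fin i by auto
        hence "emin * y i \<le> emin * ymax" using emin by simp
        thus ?thesis using ymax by (simp add: field_simps)
      qed
      also have "emin \<le> E i" unfolding emin_def using fin i by auto
      finally have "(?\<rho> + emin / ymax) * y i \<le> ?\<rho> * y i + E i" by (simp add: algebra_simps)
      thus "(?\<rho> + emin / ymax) * y i \<le> (\<Sum>j\<in>S. A i j * y j)"
        using vy[OF i] by (simp add: vapp_def)
    qed
    moreover have "emin / ymax > 0" using emin ymax by simp
    ultimately show False by linarith
  qed
  hence ev: "\<And>i. i \<in> S \<Longrightarrow> vapp S A x0 i = ?\<rho> * x0 i" by (simp add: d_def)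
  define Q where "Q = {i\<in>S. x0 i > 0}"
  have "Q = S"
    using irr unfolding irr_def
  proof (elim allE impE)
    show "Q \<subseteq> S \<and> Q \<noteq> {} \<and> (\<forall>i\<in>Q. \<forall>j\<in>S. 0 < A j i \<longrightarrow> j \<in> Q)"
    proof (intro conjI ballI impI)
      show "Q \<subseteq> S" by (auto simp: Q_def)
      show "Q \<noteq> {}" using i0 by (auto simp: Q_def)
      fix i j assume i: "i \<in> Q" and j: "j \<in> S" and Aji: "0 < A j i"
      have "vapp S A x0 j \<ge> A j i * x0 i" using i
        by (intro vapp_ge_term[OF fin A0] x0nn j) (auto simp: Q_def)
      moreover have "A j i * x0 i > 0" using Aji i by (simp add: Q_def)
      ultimately have "?\<rho> * x0 j > 0" using ev[OF j] by simp
      thus "j \<in> Q" using j rho0 by (simp add: Q_def zero_less_mult_iff)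
    qed
  qed
  hence "\<forall>i\<in>S. x0 i > 0" by (auto simp: Q_def)
  thus ?thesis using ev by blast
qed



definition Tm :: "(nat \<Rightarrow> nat \<Rightarrow> bool) \<Rightarrow> nat \<Rightarrow> nat \<Rightarrow> real" where
  "Tm T = (\<lambda>x y. if T x y then 1 else 0)"

lemma PF_T:
  assumes r: "r \<ge> 1" and irr: "irreducible01 r T" and rho: "PF_eigenvalue r T > 0"
  shows "\<exists>z z'. (\<forall>a<r. z a > 0) \<and> (\<forall>a<r. z' a > 0) \<and>
    (\<forall>a<r. (\<Sum>b<r. Tm T a b * z b) = PF_eigenvalue r T * z a) \<and>
    (\<forall>b<r. (\<Sum>a<r. z' a * Tm T a b) = PF_eigenvalue r T * z' b)"
proof -
  let ?S = "{0..<r}"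
  let ?R = "{(a, b). a < r \<and> b < r \<and> T b a}"
  have fin: "finite ?S" and Sne: "?S \<noteq> {}" using r by auto
  have A0: "\<And>i j. Tm T i j \<ge> 0" by (simp add: Tm_def)
  have pf: "PF_eigenvalue r T = spectral_radius_on ?S (Tm T)"
    unfolding PF_eigenvalue_def Tm_def ..
  have irr1: "irr ?S (Tm T)" unfolding irr_def
  proof (intro allI impI)
    fix Q assume Q: "Q \<subseteq> ?S \<and> Q \<noteq> {} \<and> (\<forall>i\<in>Q. \<forall>j\<in>?S. Tm T j i > 0 \<longrightarrow> j \<in> Q)"
    then obtain q where q: "q \<in> Q" by blast
    have "y \<in> Q" if y: "y \<in> ?S" for y
    proof -
      have "(q, y) \<in> ?R\<^sup>*" using irr q Q y unfolding irreducible01_def by auto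
      thus ?thesis
      proof (induction rule: rtrancl_induct)
        case base thus ?case using q .
      next
        case (step b c) thus ?case using Q by (auto simp: Tm_def)
      qed
    qed
    thus "Q = ?S" using Q by auto
  qed
  have irr2: "irr ?S (\<lambda>i j. Tm T j i)" unfolding irr_def
  proof (intro allI impI)
    fix Q assume Q: "Q \<subseteq> ?S \<and> Q \<noteq> {} \<and> (\<forall>i\<in>Q. \<forall>j\<in>?S. Tm T i j > 0 \<longrightarrow> j \<in> Q)"
    then obtain q where q: "q \<in> Q" by blast
    have "y \<in> Q" if y: "y \<in> ?S" for y
    proof -
      have "(y, q) \<in> ?R\<^sup>*" using irr q Q y unfolding irreducible01_def by auto
      thus ?thesis
      proof (induction rule: converse_rtrancl_induct)
        case base thus ?case using q .
      next
        case (step a b) thus ?case using Q by (auto simp: Tm_def)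
      qed
    qed
    thus "Q = ?S" using Q by auto
  qed
  have rho': "spectral_radius_on ?S (Tm T) > 0" using rho pf by simp
  have "\<exists>x. (\<forall>i\<in>?S. x i > 0) \<and> (\<forall>i\<in>?S. vapp ?S (Tm T) x i = spectral_radius_on ?S (Tm T) * x i)"
    by (rule PF_generic[OF fin Sne A0 irr1 rho'])
  then obtain z where z: "\<forall>i\<in>?S. z i > 0" "\<forall>i\<in>?S. vapp ?S (Tm T) z i = spectral_radius_on ?S (Tm T) * z i"
    by blast
  have tr: "spectral_radius_on ?S (\<lambda>i j. Tm T j i) = spectral_radius_on ?S (Tm T)"
    by (rule SR_transpose[OF fin])
  have rho'': "spectral_radius_on ?S (\<lambda>i j. Tm T j i) > 0" using rho' tr by simp
  have "\<exists>x. (\<forall>i\<in>?S. x i > 0) \<and> (\<forall>i\<in>?S. vapp ?S (\<lambda>i j. Tm T j i) x i = spectral_radius_on ?S (\<lambda>i j. Tm T j i) * x i)"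
    by (rule PF_generic[OF fin Sne A0 irr2 rho''])
  then obtain z' where z': "\<forall>i\<in>?S. z' i > 0" "\<forall>i\<in>?S. vapp ?S (\<lambda>i j. Tm T j i) z' i = spectral_radius_on ?S (Tm T) * z' i"
    using tr by auto
  have A: "\<forall>a<r. z a > 0" "\<forall>a<r. z' a > 0" using z(1) z'(1) by auto
  have B: "\<forall>a<r. (\<Sum>b<r. Tm T a b * z b) = PF_eigenvalue r T * z a"
    using z(2) pf by (simp add: vapp_def atLeast0LessThan)
  have C: "\<forall>a<r. (\<Sum>b<r. z' b * Tm T b a) = PF_eigenvalue r T * z' a"
    using z'(2) pf by (simp add: vapp_def atLeast0LessThan mult.commute)
  show ?thesis using A B C by blast
qed



lemma vapp_diff: "vapp S (\<lambda>i j. M i j - R i j) x v = vapp S M x v - vapp S R x v"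
  unfolding vapp_def by (simp add: algebra_simps sum_subtractf)

lemma vapp_diff2: "vapp S M (\<lambda>i. a i - b i) v = vapp S M a v - vapp S M b v"
  unfolding vapp_def by (simp add: algebra_simps sum_subtractf)

lemma perturb:
  fixes M R :: "'i \<Rightarrow> 'i \<Rightarrow> real"
  assumes fin: "finite S"
    and M0: "\<And>i j. i \<in> S \<Longrightarrow> j \<in> S \<Longrightarrow> M i j \<ge> 0"
    and R0: "\<And>i j. i \<in> S \<Longrightarrow> j \<in> S \<Longrightarrow> R i j \<ge> 0"
    and p0: "\<And>i. i \<in> S \<Longrightarrow> p i \<ge> 0"
    and Mp: "\<And>i. i \<in> S \<Longrightarrow> vapp S M p i = lam * p i"
    and s0: "s > 0"
    and v: "v \<in> S"
  shows "vapp S (\<lambda>i j. M i j - R i j)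
           (\<lambda>u. p u - (\<Sum>j<k. inverse s ^ Suc j * (vapp S M ^^ j) (vapp S R p) u)) v
         \<ge> s * (p v - (\<Sum>j<k. inverse s ^ Suc j * (vapp S M ^^ j) (vapp S R p) v))
           + (lam - s) * p v - inverse s ^ k * (vapp S M ^^ k) (vapp S R p) v"
proof -
  define e where "e = vapp S R p"
  define f where "f j = (vapp S M ^^ j) e" for j
  define q where "q u = (\<Sum>j<k. inverse s ^ Suc j * f j u)" for u
  have e0: "\<And>i. i \<in> S \<Longrightarrow> e i \<ge> 0" unfolding e_def using R0 p0 by (rule vapp_nonneg)
  have f0: "\<And>j i. i \<in> S \<Longrightarrow> f j i \<ge> 0" unfolding f_def by (rule vapp_pow_nonneg[OF M0 e0])
  have q0: "\<And>i. i \<in> S \<Longrightarrow> q i \<ge> 0" unfolding q_def using f0 s0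
    by (auto intro!: sum_nonneg)
  have fS: "f (Suc j) = vapp S M (f j)" for j by (simp add: f_def)
  have Mq: "vapp S M q v = (\<Sum>j<k. inverse s ^ Suc j * f (Suc j) v)"
  proof -
    have "vapp S M q v = (\<Sum>u\<in>S. \<Sum>j<k. M v u * (inverse s ^ Suc j * f j u))"
      unfolding vapp_def q_def by (simp add: sum_distrib_left)
    also have "\<dots> = (\<Sum>j<k. \<Sum>u\<in>S. M v u * (inverse s ^ Suc j * f j u))" by (rule sum.swap)
    also have "\<dots> = (\<Sum>j<k. inverse s ^ Suc j * f (Suc j) v)"
      unfolding fS vapp_def by (simp add: sum_distrib_left algebra_simps)
    finally show ?thesis .
  qed
  have tele: "(\<Sum>j<k. inverse s ^ Suc j * f (Suc j) v) = s * q v - f 0 v + inverse s ^ k * f k v"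
  proof -
    have "(\<Sum>j<Suc k. inverse s ^ j * f j v) = f 0 v + (\<Sum>j<k. inverse s ^ Suc j * f (Suc j) v)"
      by (subst sum.lessThan_Suc_shift) simp
    moreover have "(\<Sum>j<Suc k. inverse s ^ j * f j v) = (\<Sum>j<k. inverse s ^ j * f j v) + inverse s ^ k * f k v"
      by simp
    moreover have "s * q v = (\<Sum>j<k. inverse s ^ j * f j v)"
      unfolding q_def sum_distrib_left using s0 by (intro sum.cong) (auto simp: field_simps)
    ultimately show ?thesis by linarith
  qed
  have Rq: "vapp S R q v \<ge> 0" by (rule vapp_nonneg[OF R0 q0 v])
  have "vapp S (\<lambda>i j. M i j - R i j) (\<lambda>u. p u - q u) v
      = vapp S M p v - vapp S M q v - (vapp S R p v - vapp S R q v)"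
    by (simp add: vapp_diff vapp_diff2)
  also have "\<dots> = lam * p v - (s * q v - e v + inverse s ^ k * f k v) - e v + vapp S R q v"
    using Mp[OF v] Mq tele by (simp add: e_def f_def)
  finally have "vapp S (\<lambda>i j. M i j - R i j) (\<lambda>u. p u - q u) v
      \<ge> s * (p v - q v) + (lam - s) * p v - inverse s ^ k * f k v"
    using Rq by (simp add: algebra_simps)
  thus ?thesis unfolding q_def f_def e_def .
qed

lemma pathdecomp:
  assumes fin: "finite S" and v: "v \<in> S"
  shows "(vapp S M ^^ j) e v = (\<Sum>v'\<in>S. e v' * (vapp S M ^^ j) (\<lambda>u. if u = v' then 1 else 0) v)"
  using v
proof (induction j arbitrary: v)
  case 0
  have "(\<Sum>v'\<in>S. e v' * (if v = v' then 1 else 0)) = (\<Sum>v'\<in>S. if v' = v then e v' else 0)"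
    by (rule sum.cong) auto
  also have "\<dots> = e v" using fin 0 by simp
  finally show ?case by simp
next
  case (Suc j)
  have "(vapp S M ^^ Suc j) e v = (\<Sum>u\<in>S. M v u * (vapp S M ^^ j) e u)"
    by (simp add: vapp_def)
  also have "\<dots> = (\<Sum>u\<in>S. \<Sum>v'\<in>S. M v u * (e v' * (vapp S M ^^ j) (\<lambda>u. if u = v' then 1 else 0) u))"
    using Suc.IH by (simp add: sum_distrib_left)
  also have "\<dots> = (\<Sum>v'\<in>S. \<Sum>u\<in>S. M v u * (e v' * (vapp S M ^^ j) (\<lambda>u. if u = v' then 1 else 0) u))"
    by (rule sum.swap)
  also have "\<dots> = (\<Sum>v'\<in>S. e v' * (vapp S M ^^ Suc j) (\<lambda>u. if u = v' then 1 else 0) v)"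
    by (simp add: vapp_def sum_distrib_left algebra_simps)
  finally show ?case .
qed

lemma lefteig_pow:
  assumes fin: "finite S" and y: "\<And>u. u \<in> S \<Longrightarrow> (\<Sum>v\<in>S. y v * M v u) = lam * y u"
  shows "(\<Sum>v\<in>S. y v * (vapp S M ^^ j) e v) = lam ^ j * (\<Sum>v\<in>S. y v * e v)"
proof (induction j)
  case (Suc j)
  have "(\<Sum>v\<in>S. y v * (vapp S M ^^ Suc j) e v) = (\<Sum>v\<in>S. \<Sum>u\<in>S. y v * M v u * (vapp S M ^^ j) e u)"
    by (simp add: vapp_def sum_distrib_left algebra_simps)
  also have "\<dots> = (\<Sum>u\<in>S. \<Sum>v\<in>S. y v * M v u * (vapp S M ^^ j) e u)" by (rule sum.swap)
  also have "\<dots> = (\<Sum>u\<in>S. (\<Sum>v\<in>S. y v * M v u) * (vapp S M ^^ j) e u)"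
    by (simp add: sum_distrib_right)
  also have "\<dots> = (\<Sum>u\<in>S. lam * (y u * (vapp S M ^^ j) e u))"
    using y by (simp add: algebra_simps)
  also have "\<dots> = lam * (\<Sum>u\<in>S. y u * (vapp S M ^^ j) e u)" by (simp add: sum_distrib_left)
  also have "\<dots> = lam * lam ^ j * (\<Sum>v\<in>S. y v * e v)" using Suc by simp
  finally show ?case by simp
qed simp



lemma adm_len: "admissible r T k w \<Longrightarrow> length w = k"
  by (simp add: admissible_def)

lemma finite_adm: "finite (adm_words r T k)"
proof -
  have "adm_words r T k \<subseteq> {w. set w \<subseteq> {0..<r} \<and> length w = k}"
    by (auto simp: adm_words_def admissible_def)
  thus ?thesis by (rule finite_subset) (rule finite_lists_length_eq, simp)
qed

lemma adm_cons:
  assumes k: "k \<ge> 2" and v: "admissible r T k v"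
  shows "admissible r T k (a # butlast v) \<longleftrightarrow> a < r \<and> T (hd v) a"
proof -
  have lv: "length v = k" using v by (simp add: admissible_def)
  have vr: "\<forall>b\<in>set v. b < r" using v by (simp add: admissible_def)
  have vT: "\<And>i. Suc i < k \<Longrightarrow> T (v ! Suc i) (v ! i)" using v by (simp add: admissible_def)
  have hd: "hd v = v ! 0" using lv k by (cases v) auto
  have nb: "\<And>i. i < k - 1 \<Longrightarrow> butlast v ! i = v ! i" using lv by (simp add: nth_butlast)
  show ?thesis
  proof
    assume A: "admissible r T k (a # butlast v)"
    hence "a < r" by (simp add: admissible_def)
    moreover have "T ((a # butlast v) ! Suc 0) ((a # butlast v) ! 0)"
    proof -
      have "Suc 0 < k" using k by simp
      thus ?thesis using A unfolding admissible_def by blast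
    qed
    hence "T (v ! 0) a" using nb[of 0] k by simp
    ultimately show "a < r \<and> T (hd v) a" using hd by simp
  next
    assume A: "a < r \<and> T (hd v) a"
    have "set (butlast v) \<subseteq> set v" by (rule in_set_butlastD[THEN subsetI])
    hence s: "\<forall>b\<in>set (a # butlast v). b < r" using A vr by auto
    have l: "length (a # butlast v) = k" using lv k by simp
    have p: "T ((a # butlast v) ! Suc i) ((a # butlast v) ! i)" if i: "Suc i < k" for i
    proof (cases i)
      case 0 thus ?thesis using A hd nb[of 0] k by simp
    next
      case (Suc i')
      have "(a # butlast v) ! Suc i = v ! Suc i'" using nb[of "Suc i'"] i Suc by simp
      moreover have "(a # butlast v) ! i = v ! i'" using nb[of i'] i Suc by simp
      ultimately show ?thesis using vT[of i'] i Suc by simp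
    qed
    show "admissible r T k (a # butlast v)" unfolding admissible_def using s l p by blast
  qed
qed

lemma adm_snoc:
  assumes k: "k \<ge> 2" and u: "admissible r T k u"
  shows "admissible r T k (tl u @ [x]) \<longleftrightarrow> x < r \<and> T x (last u)"
proof -
  have lu: "length u = k" using u by (simp add: admissible_def)
  have ur: "\<forall>b\<in>set u. b < r" using u by (simp add: admissible_def)
  have uT: "\<And>i. Suc i < k \<Longrightarrow> T (u ! Suc i) (u ! i)" using u by (simp add: admissible_def)
  have last: "last u = u ! (k - 1)" using lu k by (metis last_conv_nth list.size(3) not_numeral_le_zero)
  have nt: "\<And>i. i < k - 1 \<Longrightarrow> (tl u @ [x]) ! i = u ! Suc i" using lu by (simp add: nth_append nth_tl)
  have nx: "(tl u @ [x]) ! (k - 1) = x" using lu by (simp add: nth_append)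
  show ?thesis
  proof
    assume A: "admissible r T k (tl u @ [x])"
    hence xr: "x < r" by (simp add: admissible_def)
    have "T ((tl u @ [x]) ! Suc (k - 2)) ((tl u @ [x]) ! (k - 2))"
    proof -
      have "Suc (k - 2) < k" using k by simp
      thus ?thesis using A unfolding admissible_def by blast
    qed
    moreover have "Suc (k - 2) = k - 1" using k by simp
    moreover have "k - 2 < k - 1" using k by simp
    ultimately have "T x (u ! (k - 1))" using nt[of "k-2"] nx k by simp
    thus "x < r \<and> T x (last u)" using last xr by simp
  next
    assume A: "x < r \<and> T x (last u)"
    have "set (tl u) \<subseteq> set u" by (cases u) auto
    hence s: "\<forall>b\<in>set (tl u @ [x]). b < r" using A ur by auto
    have l: "length (tl u @ [x]) = k" using lu k by simp
    have p: "T ((tl u @ [x]) ! Suc i) ((tl u @ [x]) ! i)" if i: "Suc i < k" for i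
    proof (cases "Suc i = k - 1")
      case True
      thus ?thesis using A nx nt[of i] last by simp
    next
      case False
      hence "Suc i < k - 1" using i by simp
      thus ?thesis using nt[of i] nt[of "Suc i"] uT[of "Suc i"] by simp
    qed
    show "admissible r T k (tl u @ [x])" unfolding admissible_def using s l p by blast
  qed
qed

lemma adm_append1:
  assumes k: "k \<ge> 1"
  shows "admissible r T (Suc k) (v @ [x]) \<longleftrightarrow> admissible r T k v \<and> x < r \<and> T x (last v)"
proof
  assume A: "admissible r T (Suc k) (v @ [x])"
  have lv: "length v = k" using A by (simp add: admissible_def)
  have n1: "\<And>i. i < k \<Longrightarrow> (v @ [x]) ! i = v ! i" using lv by (simp add: nth_append)
  have n2: "(v @ [x]) ! k = x" using lv by (metis nth_append_length)
  have P: "\<And>i. Suc i < Suc k \<Longrightarrow> T ((v @ [x]) ! Suc i) ((v @ [x]) ! i)" using A by (simp add: admissible_def)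
  have "admissible r T k v" unfolding admissible_def
  proof (intro conjI allI impI)
    show "length v = k" by (rule lv)
    show "\<forall>a\<in>set v. a < r" using A by (simp add: admissible_def)
    fix i assume "Suc i < k"
    thus "T (v ! Suc i) (v ! i)" using P[of i] n1[of i] n1[of "Suc i"] by simp
  qed
  moreover have "x < r" using A by (simp add: admissible_def)
  moreover have "T x (last v)"
  proof -
    have "T ((v @ [x]) ! Suc (k - 1)) ((v @ [x]) ! (k - 1))" using P[of "k - 1"] k by simp
    moreover have "Suc (k - 1) = k" using k by simp
    moreover have "last v = v ! (k - 1)" using lv k by (metis last_conv_nth list.size(3) not_one_le_zero)
    ultimately show ?thesis using n1[of "k - 1"] n2 k by simp
  qed
  ultimately show "admissible r T k v \<and> x < r \<and> T x (last v)" by blast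
next
  assume A: "admissible r T k v \<and> x < r \<and> T x (last v)"
  have lv: "length v = k" using A by (simp add: admissible_def)
  have n1: "\<And>i. i < k \<Longrightarrow> (v @ [x]) ! i = v ! i" using lv by (simp add: nth_append)
  have n2: "(v @ [x]) ! k = x" using lv by (metis nth_append_length)
  have last: "last v = v ! (k - 1)" using lv k by (metis last_conv_nth list.size(3) not_one_le_zero)
  show "admissible r T (Suc k) (v @ [x])" unfolding admissible_def
  proof (intro conjI allI impI)
    show "length (v @ [x]) = Suc k" using lv by simp
    show "\<forall>a\<in>set (v @ [x]). a < r" using A by (auto simp: admissible_def)
    fix i assume i: "Suc i < Suc k"
    show "T ((v @ [x]) ! Suc i) ((v @ [x]) ! i)"
    proof (cases "Suc i = k")
      case True
      thus ?thesis using A n2 n1[of i] last by (metis diff_Suc_1 lessI)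
    next
      case False
      hence "Suc i < k" using i by simp
      thus ?thesis using A n1[of i] n1[of "Suc i"] by (simp add: admissible_def)
    qed
  qed
qed

lemma adm_words_mem: "u \<in> adm_words r T k \<longleftrightarrow> admissible r T k u"
  by (simp add: adm_words_def)

lemma adm_nonempty_list: "admissible r T k u \<Longrightarrow> k \<ge> 1 \<Longrightarrow> u \<noteq> []"
  by (auto simp: admissible_def)

lemma adm_elems: "admissible r T k u \<Longrightarrow> a \<in> set u \<Longrightarrow> a < r"
  by (auto simp: admissible_def)

lemma right_set:
  assumes k: "k \<ge> 2" and v: "v \<in> adm_words r T k"
  shows "{u \<in> adm_words r T k. tl u = butlast v} = (\<lambda>a. a # butlast v) ` {a. a < r \<and> T (hd v) a}"
proof (intro equalityI subsetI)
  fix u assume u: "u \<in> {u \<in> adm_words r T k. tl u = butlast v}"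
  hence ua: "admissible r T k u" and ut: "tl u = butlast v" by (auto simp: adm_words_mem)
  have "u \<noteq> []" using ua k adm_nonempty_list by simp
  hence eq: "u = hd u # butlast v" using ut by (metis list.collapse)
  hence "admissible r T k (hd u # butlast v)" using ua by simp
  hence "hd u < r \<and> T (hd v) (hd u)" using adm_cons[OF k] v by (simp add: adm_words_mem)
  thus "u \<in> (\<lambda>a. a # butlast v) ` {a. a < r \<and> T (hd v) a}" using eq by blast
next
  fix u assume "u \<in> (\<lambda>a. a # butlast v) ` {a. a < r \<and> T (hd v) a}"
  then obtain a where a: "a < r" "T (hd v) a" "u = a # butlast v" by blast
  have "admissible r T k u" using adm_cons[OF k] v a by (simp add: adm_words_mem)
  thus "u \<in> {u \<in> adm_words r T k. tl u = butlast v}" using a by (simp add: adm_words_mem)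
qed

lemma left_set:
  assumes k: "k \<ge> 2" and u: "u \<in> adm_words r T k"
  shows "{v \<in> adm_words r T k. tl u = butlast v} = (\<lambda>x. tl u @ [x]) ` {x. x < r \<and> T x (last u)}"
proof (intro equalityI subsetI)
  fix v assume v: "v \<in> {v \<in> adm_words r T k. tl u = butlast v}"
  hence va: "admissible r T k v" and vt: "tl u = butlast v" by (auto simp: adm_words_mem)
  have "v \<noteq> []" using va k adm_nonempty_list by simp
  hence eq: "v = tl u @ [last v]" using vt by simp
  hence "admissible r T k (tl u @ [last v])" using va by simp
  hence "last v < r \<and> T (last v) (last u)" using adm_snoc[OF k] u by (simp add: adm_words_mem)
  thus "v \<in> (\<lambda>x. tl u @ [x]) ` {x. x < r \<and> T x (last u)}" using eq by blast
next
  fix v assume "v \<in> (\<lambda>x. tl u @ [x]) ` {x. x < r \<and> T x (last u)}"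
  then obtain x where x: "x < r" "T x (last u)" "v = tl u @ [x]" by blast
  have "admissible r T k v" using adm_snoc[OF k] u x by (simp add: adm_words_mem)
  thus "v \<in> {v \<in> adm_words r T k. tl u = butlast v}" using x by (simp add: adm_words_mem)
qed



lemma Tk_empty: "Tk_mat r T k {} v u = (if admissible r T k u \<and> admissible r T k v \<and> tl u = butlast v then 1 else 0)"
  by (simp add: Tk_mat_def)

lemma right_eig:
  assumes k: "k \<ge> 2" and v: "v \<in> adm_words r T k"
    and z: "\<forall>a<r. (\<Sum>b<r. Tm T a b * z b) = lam * z a"
  shows "vapp (adm_words r T k) (Tk_mat r T k {}) (\<lambda>u. z (hd u)) v = lam * z (hd v)"
proof -
  let ?S = "adm_words r T k"
  have va: "admissible r T k v" using v by (simp add: adm_words_mem)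
  have hv: "hd v < r" using va k adm_nonempty_list[OF va] adm_elems[OF va] by (simp add: hd_in_set)
  have "vapp ?S (Tk_mat r T k {}) (\<lambda>u. z (hd u)) v = (\<Sum>u\<in>?S. if tl u = butlast v then z (hd u) else 0)"
    unfolding vapp_def Tk_empty using va by (intro sum.cong) (auto simp: adm_words_mem)
  also have "\<dots> = (\<Sum>u\<in>{u\<in>?S. tl u = butlast v}. z (hd u))"
    by (rule sum.inter_filter[symmetric]) (rule finite_adm)
  also have "\<dots> = (\<Sum>u\<in>(\<lambda>a. a # butlast v) ` {a. a < r \<and> T (hd v) a}. z (hd u))"
    unfolding right_set[OF k v] ..
  also have "\<dots> = (\<Sum>a\<in>{a. a < r \<and> T (hd v) a}. z a)"
    by (subst sum.reindex) (auto simp: inj_on_def)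
  also have "\<dots> = (\<Sum>b\<in>{b\<in>{..<r}. T (hd v) b}. z b)" by (intro sum.cong) auto
  also have "\<dots> = (\<Sum>b<r. Tm T (hd v) b * z b)"
    by (subst sum.inter_filter) (auto simp: Tm_def intro!: sum.cong)
  also have "\<dots> = lam * z (hd v)" using z hv by simp
  finally show ?thesis .
qed

lemma left_eig:
  assumes k: "k \<ge> 2" and u: "u \<in> adm_words r T k"
    and z: "\<forall>b<r. (\<Sum>a<r. z a * Tm T a b) = lam * z b"
  shows "(\<Sum>v\<in>adm_words r T k. z (last v) * Tk_mat r T k {} v u) = lam * z (last u)"
proof -
  let ?S = "adm_words r T k"
  have ua: "admissible r T k u" using u by (simp add: adm_words_mem)
  have hu: "last u < r" using ua k adm_nonempty_list[OF ua] adm_elems[OF ua] by simp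
  have "(\<Sum>v\<in>?S. z (last v) * Tk_mat r T k {} v u) = (\<Sum>v\<in>?S. if tl u = butlast v then z (last v) else 0)"
    unfolding Tk_empty using ua by (intro sum.cong) (auto simp: adm_words_mem)
  also have "\<dots> = (\<Sum>v\<in>{v\<in>?S. tl u = butlast v}. z (last v))"
    by (rule sum.inter_filter[symmetric]) (rule finite_adm)
  also have "\<dots> = (\<Sum>v\<in>(\<lambda>x. tl u @ [x]) ` {x. x < r \<and> T x (last u)}. z (last v))"
    unfolding left_set[OF k u] ..
  also have "\<dots> = (\<Sum>x\<in>{x. x < r \<and> T x (last u)}. z x)"
    by (subst sum.reindex) (auto simp: inj_on_def)
  also have "\<dots> = (\<Sum>a\<in>{a\<in>{..<r}. T a (last u)}. z a)" by (intro sum.cong) auto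
  also have "\<dots> = (\<Sum>a<r. z a * Tm T a (last u))"
    by (subst sum.inter_filter) (auto simp: Tm_def intro!: sum.cong)
  also have "\<dots> = lam * z (last u)" using z hu by simp
  finally show ?thesis .
qed

lemma adm1_image: "adm_words r T 1 = (\<lambda>a. [a]) ` {..<r}"
proof (intro equalityI subsetI)
  fix w assume "w \<in> adm_words r T 1"
  hence w: "admissible r T 1 w" by (simp add: adm_words_mem)
  then obtain a where "w = [a]" by (auto simp: admissible_def length_Suc_conv)
  thus "w \<in> (\<lambda>a. [a]) ` {..<r}" using w by (auto simp: admissible_def)
qed (auto simp: adm_words_mem admissible_def)

lemma adm_suc_image:
  assumes k: "k \<ge> 1"
  shows "adm_words r T (Suc k) = (\<lambda>(v, x). v @ [x]) ` (SIGMA v:adm_words r T k. {x. x < r \<and> T x (last v)})"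
proof (intro equalityI subsetI)
  fix w assume "w \<in> adm_words r T (Suc k)"
  hence w: "admissible r T (Suc k) w" by (simp add: adm_words_mem)
  hence "w \<noteq> []" by (auto simp: admissible_def)
  hence eq: "w = butlast w @ [last w]" by simp
  hence "admissible r T (Suc k) (butlast w @ [last w])" using w by simp
  hence "admissible r T k (butlast w) \<and> last w < r \<and> T (last w) (last (butlast w))"
    using adm_append1[OF k] by blast
  thus "w \<in> (\<lambda>(v, x). v @ [x]) ` (SIGMA v:adm_words r T k. {x. x < r \<and> T x (last v)})"
    using eq by (auto simp: adm_words_mem intro!: image_eqI[of _ _ "(butlast w, last w)"])
next
  fix w assume "w \<in> (\<lambda>(v, x). v @ [x]) ` (SIGMA v:adm_words r T k. {x. x < r \<and> T x (last v)})"
  then obtain v x where "v \<in> adm_words r T k" "x < r" "T x (last v)" "w = v @ [x]" by auto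
  thus "w \<in> adm_words r T (Suc k)" using adm_append1[OF k] by (simp add: adm_words_mem)
qed

lemma count_words:
  assumes k: "k \<ge> 1" and z: "\<forall>b<r. (\<Sum>a<r. z a * Tm T a b) = lam * z b"
  shows "(\<Sum>v\<in>adm_words r T k. z (last v)) = lam ^ (k - 1) * (\<Sum>a<r. z a)"
  using k
proof (induction k rule: nat_induct_at_least)
  case base
  show ?case unfolding adm1_image by (subst sum.reindex) (auto simp: inj_on_def)
next
  case (Suc k)
  have inj: "inj_on (\<lambda>(v, x). v @ [x]) (SIGMA v:adm_words r T k. {x. x < r \<and> T x (last v)})"
    by (auto simp: inj_on_def adm_words_mem admissible_def)
  have fin: "finite {x. x < r \<and> T x (last v)}" for v by simp
  have "(\<Sum>w\<in>adm_words r T (Suc k). z (last w))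
      = (\<Sum>(v, x)\<in>(SIGMA v:adm_words r T k. {x. x < r \<and> T x (last v)}). z (last (v @ [x])))"
    unfolding adm_suc_image[OF Suc(1)] by (subst sum.reindex[OF inj]) (simp add: case_prod_unfold)
  also have "\<dots> = (\<Sum>v\<in>adm_words r T k. \<Sum>x\<in>{x. x < r \<and> T x (last v)}. z x)"
    by (subst sum.Sigma[symmetric]) (auto simp: finite_adm)
  also have "\<dots> = (\<Sum>v\<in>adm_words r T k. lam * z (last v))"
  proof (rule sum.cong[OF refl])
    fix v assume v: "v \<in> adm_words r T k"
    have va: "admissible r T k v" using v by (simp add: adm_words_mem)
    have hv: "last v < r" using va Suc(1) adm_nonempty_list[OF va] adm_elems[OF va] by simp
    have "(\<Sum>x\<in>{x. x < r \<and> T x (last v)}. z x) = (\<Sum>a\<in>{a\<in>{..<r}. T a (last v)}. z a)"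
      by (intro sum.cong) auto
    also have "\<dots> = (\<Sum>a<r. z a * Tm T a (last v))"
      by (subst sum.inter_filter) (auto simp: Tm_def intro!: sum.cong)
    also have "\<dots> = lam * z (last v)" using z hv by simp
    finally show "(\<Sum>x\<in>{x. x < r \<and> T x (last v)}. z x) = lam * z (last v)" .
  qed
  also have "\<dots> = lam * (\<Sum>v\<in>adm_words r T k. z (last v))" by (simp add: sum_distrib_left)
  also have "\<dots> = lam * (lam ^ (k - 1) * (\<Sum>a<r. z a))" using Suc(2) by simp
  also have "\<dots> = lam ^ (Suc k - 1) * (\<Sum>a<r. z a)" using Suc(1)
    by (cases k) auto
  finally show ?case .
qed



lemma path_bound:
  assumes k: "k \<ge> 2" and v': "v' \<in> adm_words r T k" and j: "j \<le> k"
  shows "0 \<le> (vapp (adm_words r T k) (Tk_mat r T k {}) ^^ j) (\<lambda>u. if u = v' then 1 else 0) w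
       \<and> (vapp (adm_words r T k) (Tk_mat r T k {}) ^^ j) (\<lambda>u. if u = v' then 1 else 0) w \<le> 1
       \<and> ((vapp (adm_words r T k) (Tk_mat r T k {}) ^^ j) (\<lambda>u. if u = v' then 1 else 0) w \<noteq> 0
            \<longrightarrow> take (k - j) w = drop j v')"
  using j
proof (induction j arbitrary: w)
  case 0
  have "length v' = k" using v' by (simp add: adm_words_mem admissible_def)
  thus ?case by auto
next
  case (Suc j)
  let ?S = "adm_words r T k"
  let ?M = "Tk_mat r T k {}"
  let ?F = "\<lambda>j. (vapp ?S ?M ^^ j) (\<lambda>u. if u = v' then 1 else 0)"
  have jk: "j < k" using Suc by simp
  define Fj where "Fj = ?F j"
  have IH: "0 \<le> Fj u \<and> Fj u \<le> 1 \<and> (Fj u \<noteq> 0 \<longrightarrow> take (k - j) u = drop j v')" for u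
    using Suc.IH[of u] jk unfolding Fj_def by simp
  define g where "g u = ?M w u * Fj u" for u
  have eq: "?F (Suc j) w = (\<Sum>u\<in>?S. g u)" by (simp add: vapp_def g_def Fj_def)
  have Mw: "?M w u = (if admissible r T k u \<and> admissible r T k w \<and> tl u = butlast w then 1 else 0)" for u
    by (rule Tk_empty)
  have g01: "0 \<le> g u \<and> g u \<le> 1" for u
    using IH[of u] unfolding g_def Mw by auto
  have gnz: "admissible r T k w \<and> admissible r T k u \<and> tl u = butlast w \<and> take (k - j) u = drop j v'"
    if "g u \<noteq> 0" for u
    using that IH[of u] unfolding g_def Mw by (auto split: if_splits)
  have uniq: "u1 = u2" if "g u1 \<noteq> 0" "g u2 \<noteq> 0" for u1 u2
  proof -
    have a1: "admissible r T k u1" "tl u1 = butlast w" "take (k - j) u1 = drop j v'" using gnz[OF that(1)] by auto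
    have a2: "admissible r T k u2" "tl u2 = butlast w" "take (k - j) u2 = drop j v'" using gnz[OF that(2)] by auto
    have n1: "u1 \<noteq> []" using a1(1) k adm_nonempty_list by simp
    have n2: "u2 \<noteq> []" using a2(1) k adm_nonempty_list by simp
    have "hd u1 = hd (take (k - j) u1)" using n1 jk by (cases u1) (auto simp: take_Cons')
    also have "\<dots> = hd (take (k - j) u2)" using a1 a2 by simp
    also have "\<dots> = hd u2" using n2 jk by (cases u2) (auto simp: take_Cons')
    finally have "hd u1 = hd u2" .
    thus ?thesis using a1(2) a2(2) n1 n2 by (metis list.collapse)
  qed
  show ?case
  proof (cases "\<exists>u\<in>?S. g u \<noteq> 0")
    case False
    hence "?F (Suc j) w = 0" unfolding eq by (intro sum.neutral) auto
    thus ?thesis by simp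
  next
    case True
    then obtain u0 where u0: "u0 \<in> ?S" "g u0 \<noteq> 0" by blast
    have "(\<Sum>u\<in>?S. g u) = g u0 + (\<Sum>u\<in>?S - {u0}. g u)"
      using u0(1) finite_adm by (subst sum.remove) auto
    also have "(\<Sum>u\<in>?S - {u0}. g u) = 0"
      using uniq u0(2) by (intro sum.neutral) blast
    finally have F: "?F (Suc j) w = g u0" unfolding eq by simp
    have a: "admissible r T k w" "tl u0 = butlast w" "take (k - j) u0 = drop j v'" using gnz[OF u0(2)] by auto
    have lw: "length w = k" using a(1) by (simp add: admissible_def)
    have "take (k - Suc j) w = take (k - Suc j) (butlast w)"
      using lw jk by (simp add: take_butlast)
    also have "\<dots> = take (k - j - 1) (tl u0)" using a(2) by simp
    also have "\<dots> = tl (take (k - j) u0)" by (simp add: tl_take)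
    also have "\<dots> = tl (drop j v')" using a(3) by simp
    also have "\<dots> = drop (Suc j) v'" by (simp add: drop_Suc tl_drop)
    finally show ?thesis using F g01[of u0] by simp
  qed
qed



lemma SR_upper:
  assumes fin: "finite S" and Sne: "S \<noteq> {}"
    and A0: "\<And>i j. i \<in> S \<Longrightarrow> j \<in> S \<Longrightarrow> A i j \<ge> 0"
    and AM: "\<And>i j. i \<in> S \<Longrightarrow> j \<in> S \<Longrightarrow> A i j \<le> M i j"
    and y0: "\<And>i. i \<in> S \<Longrightarrow> y i > 0"
    and yM: "\<And>j. j \<in> S \<Longrightarrow> (\<Sum>i\<in>S. y i * M i j) = lam * y j"
  shows "spectral_radius_on S A \<le> lam"
proof (rule SR_le[OF fin Sne])
  fix l assume "is_eigenvalue S A l"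
  then obtain v where v1: "\<exists>i\<in>S. v i \<noteq> 0"
    and v2: "\<forall>i\<in>S. (\<Sum>j\<in>S. complex_of_real (A i j) * v j) = l * v i"
    unfolding is_eigenvalue_def by blast
  have b: "cmod l * cmod (v i) \<le> (\<Sum>j\<in>S. M i j * cmod (v j))" if i: "i \<in> S" for i
  proof -
    have "cmod l * cmod (v i) = cmod (\<Sum>j\<in>S. complex_of_real (A i j) * v j)"
      using v2 i by (simp add: norm_mult)
    also have "\<dots> \<le> (\<Sum>j\<in>S. cmod (complex_of_real (A i j) * v j))" by (rule norm_sum)
    also have "\<dots> = (\<Sum>j\<in>S. A i j * cmod (v j))"
      by (rule sum.cong) (auto simp: norm_mult A0 i)
    also have "\<dots> \<le> (\<Sum>j\<in>S. M i j * cmod (v j))"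
      by (rule sum_mono) (simp add: mult_right_mono AM i)
    finally show ?thesis .
  qed
  have "cmod l * (\<Sum>i\<in>S. y i * cmod (v i)) = (\<Sum>i\<in>S. y i * (cmod l * cmod (v i)))"
    by (simp add: sum_distrib_left algebra_simps)
  also have "\<dots> \<le> (\<Sum>i\<in>S. y i * (\<Sum>j\<in>S. M i j * cmod (v j)))"
    by (rule sum_mono) (use b y0 in \<open>auto intro: mult_left_mono less_imp_le\<close>)
  also have "\<dots> = (\<Sum>i\<in>S. \<Sum>j\<in>S. y i * M i j * cmod (v j))"
    by (simp add: sum_distrib_left algebra_simps)
  also have "\<dots> = (\<Sum>j\<in>S. \<Sum>i\<in>S. y i * M i j * cmod (v j))" by (rule sum.swap)
  also have "\<dots> = (\<Sum>j\<in>S. (\<Sum>i\<in>S. y i * M i j) * cmod (v j))"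
    by (simp add: sum_distrib_right)
  also have "\<dots> = lam * (\<Sum>j\<in>S. y j * cmod (v j))"
    using yM by (simp add: sum_distrib_left algebra_simps)
  finally have le: "cmod l * (\<Sum>i\<in>S. y i * cmod (v i)) \<le> lam * (\<Sum>j\<in>S. y j * cmod (v j))" .
  obtain i0 where i0: "i0 \<in> S" "v i0 \<noteq> 0" using v1 by blast
  have "y i0 * cmod (v i0) \<le> (\<Sum>i\<in>S. y i * cmod (v i))"
    using fin i0 y0 by (intro member_le_sum) (auto intro!: mult_nonneg_nonneg less_imp_le[OF y0])
  moreover have "y i0 * cmod (v i0) > 0" using y0[OF i0(1)] i0(2) by simp
  ultimately have "(\<Sum>i\<in>S. y i * cmod (v i)) > 0" by linarith
  thus "cmod l \<le> lam" using le by simp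
qed

lemma R_count:
  assumes k: "k \<ge> 1"
  shows "(\<Sum>v\<in>adm_words r T k. \<Sum>u\<in>adm_words r T k. Tk_mat r T k {} v u - Tk_mat r T k {w1, w2} v u) \<le> 2"
proof -
  let ?S = "adm_words r T k"
  define P where "P = {(v, u) \<in> ?S \<times> ?S. tl u = butlast v \<and> u @ [last v] \<in> {w1, w2}}"
  have "(\<Sum>v\<in>?S. \<Sum>u\<in>?S. Tk_mat r T k {} v u - Tk_mat r T k {w1, w2} v u)
      = (\<Sum>(v, u)\<in>?S \<times> ?S. if (v, u) \<in> P then 1 else 0)"
    unfolding sum.cartesian_product
    by (intro sum.cong) (auto simp: P_def Tk_mat_def adm_words_mem)
  also have "\<dots> = (\<Sum>x\<in>?S \<times> ?S. if x \<in> P then 1 else 0)"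
    by (simp add: case_prod_unfold)
  also have "\<dots> = (\<Sum>x\<in>{x \<in> ?S \<times> ?S. x \<in> P}. 1)"
    by (rule sum.inter_filter[symmetric]) (simp add: finite_adm)
  also have "{x \<in> ?S \<times> ?S. x \<in> P} = P" by (auto simp: P_def)
  also have "(\<Sum>x\<in>P. (1::real)) = card P" by simp
  also have "card P \<le> card {w1, w2}"
  proof (rule card_inj_on_le)
    show "inj_on (\<lambda>(v, u). u @ [last v]) P"
    proof (rule inj_onI)
      fix a b assume a: "a \<in> P" and b: "b \<in> P" and ab: "(\<lambda>(v, u). u @ [last v]) a = (\<lambda>(v, u). u @ [last v]) b"
      obtain v1 u1 where a1: "a = (v1, u1)" by (cases a)
      obtain v2 u2 where b1: "b = (v2, u2)" by (cases b)
      have p1: "(v1, u1) \<in> P" and p2: "(v2, u2) \<in> P" and eq: "u1 @ [last v1] = u2 @ [last v2]"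
        using a b ab a1 b1 by auto
      have l: "length u1 = k" "length u2 = k" "length v1 = k" "length v2 = k"
        using p1 p2 by (auto simp: P_def adm_words_mem admissible_def)
      have "u1 = u2" "last v1 = last v2" using eq l by auto
      moreover have "v1 = butlast v1 @ [last v1]" "v2 = butlast v2 @ [last v2]"
        using l k by (metis append_butlast_last_id list.size(3) not_one_le_zero)+
      moreover have "butlast v1 = tl u1" "butlast v2 = tl u2" using p1 p2 by (auto simp: P_def)
      ultimately show "a = b" using a1 b1 by metis
    qed
    show "(\<lambda>(v, u). u @ [last v]) ` P \<subseteq> {w1, w2}" by (auto simp: P_def)
  qed simp
  also have "card {w1, w2} \<le> 2" by (simp add: card_insert_le_m1)
  finally show ?thesis by simp
qed



lemma hd_lt: "u \<in> adm_words r T k \<Longrightarrow> k \<ge> 1 \<Longrightarrow> hd u < r"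
  by (metis adm_elems adm_nonempty_list adm_words_mem hd_in_set)

lemma last_lt: "u \<in> adm_words r T k \<Longrightarrow> k \<ge> 1 \<Longrightarrow> last u < r"
  by (metis adm_elems adm_nonempty_list adm_words_mem last_in_set)

lemma fixed_k:
  assumes k: "k \<ge> 2" and rho1: "rho > 1" and r: "r \<ge> 1"
    and zb: "\<And>a. a < r \<Longrightarrow> zmin \<le> z a \<and> z a \<le> zmax" and zmin: "zmin > 0"
    and z'b: "\<And>a. a < r \<Longrightarrow> z'min \<le> z' a \<and> z' a \<le> z'max" and z'min: "z'min > 0"
    and zr: "\<forall>a<r. (\<Sum>b<r. Tm T a b * z b) = rho * z a"
    and zl: "\<forall>b<r. (\<Sum>a<r. z' a * Tm T a b) = rho * z' b"
    and eps: "eps = 4 * zmax / zmin * inverse (rho ^ k)"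
    and keps: "real k * eps \<le> rho / 2"
    and big: "8 * real k * zmax * z'max < zmin * z'min * rho ^ (k - 1)"
  shows "\<bar>spectral_radius_on (adm_words r T k) (Tk_mat r T k {w1, w2}) - rho\<bar> \<le> eps"
proof -
  define S where "S = adm_words r T k"
  define M where "M = Tk_mat r T k {}"
  define A where "A = Tk_mat r T k {w1, w2}"
  define R where "R v u = M v u - A v u" for v u
  define p where "p u = z (hd u)" for u
  define y where "y v = z' (last v)" for v
  define s where "s = rho - eps"
  define e where "e = vapp S R p"
  define f where "f j = (vapp S M ^^ j) e" for j
  define q where "q v = (\<Sum>j<k. inverse s ^ Suc j * f j v)" for v
  define x where "x v = p v - q v" for v
  have k1: "k \<ge> 1" using k by simp
  have fin: "finite S" unfolding S_def by (rule finite_adm)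
  have zmax: "zmax > 0" using zb[of 0] r zmin by auto
  have z'max: "z'max > 0" using z'b[of 0] r z'min by auto
  have eps0: "eps > 0" using eps zmin zmax rho1 by simp
  have "1 * eps \<le> real k * eps" using k eps0 by (intro mult_right_mono) auto
  hence eps2: "eps \<le> rho / 2" using keps by simp
  have s0: "s \<ge> rho / 2" unfolding s_def using eps2 by simp
  have spos: "s > 0" using s0 rho1 by simp
  have sk: "s ^ k \<ge> rho ^ k / 2"
  proof -
    have "1 + real k * (- (eps / rho)) \<le> (1 + - (eps / rho)) ^ k"
      by (rule Bernoulli_inequality) (use eps2 rho1 in \<open>simp add: field_simps\<close>)
    moreover have "real k * (eps / rho) \<le> 1 / 2" using keps rho1 by (simp add: field_simps)
    ultimately have "(1 - eps / rho) ^ k \<ge> 1 / 2" by simp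
    moreover have "s = rho * (1 - eps / rho)" unfolding s_def using rho1 by (simp add: field_simps)
    ultimately have "s ^ k \<ge> rho ^ k * (1 / 2)"
    proof -
      assume a: "(1 - eps / rho) ^ k \<ge> 1 / 2" and b: "s = rho * (1 - eps / rho)"
      have "rho ^ k * (1 / 2) \<le> rho ^ k * (1 - eps / rho) ^ k"
        using a rho1 by (intro mult_left_mono) auto
      also have "\<dots> = s ^ k" using b by (simp add: power_mult_distrib)
      finally show ?thesis .
    qed
    thus ?thesis by simp
  qed
  have invsk: "inverse s ^ k \<le> 2 * inverse (rho ^ k)"
  proof -
    have "inverse s ^ k = inverse (s ^ k)" by (simp add: power_inverse)
    also have "\<dots> \<le> inverse (rho ^ k / 2)" using sk rho1 by (intro le_imp_inverse_le) auto
    also have "\<dots> = 2 * inverse (rho ^ k)" by (simp add: inverse_eq_divide)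
    finally show ?thesis .
  qed
  have Sadm: "\<And>u. u \<in> S \<longleftrightarrow> admissible r T k u" by (simp add: S_def adm_words_mem)
  have M01: "M i j = (if i \<in> S \<and> j \<in> S \<and> tl j = butlast i then 1 else 0)" for i j
    unfolding M_def Tk_empty Sadm by auto
  have A01: "A i j = (if i \<in> S \<and> j \<in> S \<and> tl j = butlast i \<and> j @ [last i] \<notin> {w1, w2} then 1 else 0)" for i j
    unfolding A_def Tk_mat_def Sadm by auto
  have M0: "\<And>i j. M i j \<ge> 0" by (simp add: M01)
  have A0: "\<And>i j. A i j \<ge> 0" by (simp add: A01)
  have R0: "\<And>i j. R i j \<ge> 0" by (simp add: R_def M01 A01)
  have AM: "\<And>i j. A i j \<le> M i j" by (simp add: M01 A01)
  have MR: "(\<lambda>i j. M i j - R i j) = A" by (simp add: R_def)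
  have pb: "\<And>u. u \<in> S \<Longrightarrow> zmin \<le> p u \<and> p u \<le> zmax" unfolding p_def S_def using zb hd_lt k1 by blast
  have yb: "\<And>u. u \<in> S \<Longrightarrow> z'min \<le> y u \<and> y u \<le> z'max" unfolding y_def S_def using z'b last_lt k1 by blast
  have p0: "\<And>u. u \<in> S \<Longrightarrow> p u \<ge> 0" using pb zmin by (meson less_imp_le order_trans)
  have y0: "\<And>u. u \<in> S \<Longrightarrow> y u > 0" using yb z'min by (meson less_le_trans)
  have Mp: "\<And>v. v \<in> S \<Longrightarrow> vapp S M p v = rho * p v"
    unfolding S_def M_def p_def using right_eig[OF k _ zr] by blast
  have yM: "\<And>u. u \<in> S \<Longrightarrow> (\<Sum>v\<in>S. y v * M v u) = rho * y u"
    unfolding S_def M_def y_def using left_eig[OF k _ zl] by blast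
  have cnt: "(\<Sum>v\<in>S. y v) = rho ^ (k - 1) * (\<Sum>a<r. z' a)"
    unfolding S_def y_def by (rule count_words[OF k1 zl])
  have z'sum: "(\<Sum>a<r. z' a) \<ge> z'min"
  proof -
    have "z' 0 \<le> (\<Sum>a<r. z' a)" using r z'b z'min
      by (intro member_le_sum) (auto intro: order_trans[OF less_imp_le])
    thus ?thesis using z'b[of 0] r by simp
  qed
  have Sne: "S \<noteq> {}"
  proof
    assume "S = {}"
    hence "rho ^ (k - 1) * (\<Sum>a<r. z' a) = 0" using cnt by simp
    moreover have "rho ^ (k - 1) * (\<Sum>a<r. z' a) > 0" using rho1 z'sum z'min by simp
    ultimately show False by linarith
  qed
  have upper: "spectral_radius_on S A \<le> rho"
    by (rule SR_upper[OF fin Sne, where M=M and y=y]) (use A0 AM y0 yM in auto)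
  have Rsum: "(\<Sum>v\<in>S. \<Sum>u\<in>S. R v u) \<le> 2"
    unfolding S_def R_def M_def A_def by (rule R_count[OF k1])
  have e0: "\<And>v. v \<in> S \<Longrightarrow> e v \<ge> 0" unfolding e_def using R0 p0 by (intro vapp_nonneg) auto
  have esum: "(\<Sum>v\<in>S. e v) \<le> 2 * zmax"
  proof -
    have "(\<Sum>v\<in>S. e v) \<le> (\<Sum>v\<in>S. \<Sum>u\<in>S. R v u * zmax)"
      unfolding e_def vapp_def
      by (intro sum_mono mult_left_mono) (use pb R0 in auto)
    also have "\<dots> = zmax * (\<Sum>v\<in>S. \<Sum>u\<in>S. R v u)" by (simp add: sum_distrib_left sum_distrib_right algebra_simps)
    also have "\<dots> \<le> zmax * 2" using Rsum zmax by (intro mult_left_mono) auto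
    finally show ?thesis by simp
  qed
  have fk: "f k v \<le> 2 * zmax" if v: "v \<in> S" for v
  proof -
    have "f k v = (\<Sum>v'\<in>S. e v' * (vapp S M ^^ k) (\<lambda>u. if u = v' then 1 else 0) v)"
      unfolding f_def by (rule pathdecomp[OF fin v])
    also have "\<dots> \<le> (\<Sum>v'\<in>S. e v' * 1)"
    proof (intro sum_mono mult_left_mono)
      fix v' assume v': "v' \<in> S"
      show "(vapp S M ^^ k) (\<lambda>u. if u = v' then 1 else 0) v \<le> 1"
        using path_bound[OF k v'[unfolded S_def] order_refl, of v] unfolding S_def M_def by blast
      show "e v' \<ge> 0" using e0 v' .
    qed
    also have "\<dots> \<le> 2 * zmax" using esum by simp
    finally show ?thesis .
  qed
  have pert: "vapp S A x v \<ge> s * x v" if v: "v \<in> S" for v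
  proof -
    have P: "vapp S (\<lambda>i j. M i j - R i j)
           (\<lambda>u. p u - (\<Sum>j<k. inverse s ^ Suc j * (vapp S M ^^ j) (vapp S R p) u)) v
         \<ge> s * (p v - (\<Sum>j<k. inverse s ^ Suc j * (vapp S M ^^ j) (vapp S R p) v))
           + (rho - s) * p v - inverse s ^ k * (vapp S M ^^ k) (vapp S R p) v"
      by (rule perturb[OF fin _ _ p0 Mp spos v]) (use M0 R0 in auto)
    hence P': "vapp S A x v \<ge> s * x v + eps * p v - inverse s ^ k * f k v"
      unfolding MR x_def q_def f_def e_def s_def by simp
    have "inverse s ^ k * f k v \<le> 2 * inverse (rho ^ k) * (2 * zmax)"
    proof (rule mult_mono[OF invsk fk[OF v]])
      show "0 \<le> 2 * inverse (rho ^ k)" using rho1 by simp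
      show "0 \<le> f k v" unfolding f_def by (rule vapp_pow_nonneg[OF _ e0 v]) (simp add: M0)
    qed
    also have "\<dots> = eps * zmin" unfolding eps using zmin by (simp add: field_simps)
    also have "\<dots> \<le> eps * p v" using eps0 pb[OF v] by simp
    finally show ?thesis using P' by simp
  qed
  define xp where "xp v = max (x v) 0" for v
  have xp0: "\<And>v. xp v \<ge> 0" by (simp add: xp_def)
  have pertp: "(\<Sum>j\<in>S. A v j * xp j) \<ge> s * xp v" if v: "v \<in> S" for v
  proof -
    have "vapp S A x v \<le> vapp S A xp v" unfolding vapp_def
      by (intro sum_mono mult_left_mono) (auto simp: xp_def A0)
    moreover have "vapp S A xp v \<ge> 0" by (rule vapp_nonneg) (auto simp: A0 xp0 v)
    ultimately have "vapp S A xp v \<ge> s * xp v"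
      using pert[OF v] spos unfolding xp_def by (cases "x v \<ge> 0") (auto simp: max_def)
    thus ?thesis unfolding vapp_def .
  qed
  have f0: "\<And>j v. v \<in> S \<Longrightarrow> f j v \<ge> 0" unfolding f_def by (rule vapp_pow_nonneg[OF _ e0]) (auto simp: M0)
  have yq: "(\<Sum>v\<in>S. y v * q v) \<le> 8 * real k * zmax * z'max"
  proof -
    have ye: "(\<Sum>v\<in>S. y v * e v) \<le> z'max * (2 * zmax)"
    proof -
      have "(\<Sum>v\<in>S. y v * e v) \<le> (\<Sum>v\<in>S. z'max * e v)"
        by (intro sum_mono mult_right_mono) (use yb e0 in auto)
      also have "\<dots> = z'max * (\<Sum>v\<in>S. e v)" by (simp add: sum_distrib_left)
      also have "\<dots> \<le> z'max * (2 * zmax)" using esum z'max by (intro mult_left_mono) auto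
      finally show ?thesis .
    qed
    have ratio: "inverse s ^ Suc j * rho ^ j \<le> 4" if j: "j < k" for j
    proof -
      have rs: "rho / s \<ge> 1" using s_def eps0 spos by (simp add: field_simps)
      have "inverse s ^ Suc j * rho ^ j = (rho / s) ^ j * inverse s"
        by (simp add: power_divide field_simps)
      also have "(rho / s) ^ j \<le> (rho / s) ^ k" using rs j by (intro power_increasing) auto
      hence "(rho / s) ^ j * inverse s \<le> (rho / s) ^ k * inverse s" using spos by (intro mult_right_mono) auto
      also have "(rho / s) ^ k = rho ^ k / s ^ k" by (simp add: power_divide)
      also have "\<dots> \<le> 2" using sk spos rho1 by (simp add: divide_le_eq)
      hence "rho ^ k / s ^ k * inverse s \<le> 2 * inverse s" using spos by (intro mult_right_mono) auto
      also have "inverse s \<le> 2"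
      proof -
        have "s \<ge> 1 / 2" using s0 rho1 by simp
        hence "inverse s \<le> inverse (1 / 2)" by (intro le_imp_inverse_le) auto
        thus ?thesis by simp
      qed
      hence "2 * inverse s \<le> 4" by simp
      finally show ?thesis .
    qed
    have "(\<Sum>v\<in>S. y v * q v) = (\<Sum>j<k. inverse s ^ Suc j * (\<Sum>v\<in>S. y v * f j v))"
      unfolding q_def by (simp add: sum_distrib_left sum.swap[of _ S] algebra_simps)
    also have "\<dots> = (\<Sum>j<k. inverse s ^ Suc j * rho ^ j * (\<Sum>v\<in>S. y v * e v))"
      unfolding f_def using lefteig_pow[OF fin yM] by (simp add: algebra_simps)
    also have "\<dots> \<le> (\<Sum>j<k. 4 * (z'max * (2 * zmax)))"
    proof (rule sum_mono)
      fix j assume "j \<in> {..<k}"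
      hence "inverse s ^ Suc j * rho ^ j \<le> 4" using ratio by simp
      moreover have "(\<Sum>v\<in>S. y v * e v) \<ge> 0"
        by (intro sum_nonneg mult_nonneg_nonneg) (use e0 y0 in \<open>auto intro: less_imp_le\<close>)
      moreover have "inverse s ^ Suc j * rho ^ j \<ge> 0" using spos rho1 by simp
      ultimately show "inverse s ^ Suc j * rho ^ j * (\<Sum>v\<in>S. y v * e v) \<le> 4 * (z'max * (2 * zmax))"
        using ye by (meson mult_mono order_trans less_imp_le zero_le_numeral)
    qed
    also have "\<dots> = 8 * real k * zmax * z'max" by simp
    finally show ?thesis .
  qed
  have yp: "(\<Sum>v\<in>S. y v * p v) \<ge> zmin * z'min * rho ^ (k - 1)"
  proof -
    have "(\<Sum>v\<in>S. y v * p v) \<ge> (\<Sum>v\<in>S. y v * zmin)"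
      by (intro sum_mono mult_left_mono) (use pb y0 in \<open>auto intro: less_imp_le\<close>)
    moreover have "(\<Sum>v\<in>S. y v * zmin) = zmin * (rho ^ (k - 1) * (\<Sum>a<r. z' a))"
      using cnt by (simp add: sum_distrib_right[symmetric])
    moreover have "zmin * (rho ^ (k - 1) * (\<Sum>a<r. z' a)) \<ge> zmin * (rho ^ (k - 1) * z'min)"
      using z'sum zmin rho1 by (intro mult_left_mono) auto
    ultimately show ?thesis by (simp add: algebra_simps)
  qed
  have "(\<Sum>v\<in>S. y v * x v) > 0"
  proof -
    have "(\<Sum>v\<in>S. y v * x v) = (\<Sum>v\<in>S. y v * p v) - (\<Sum>v\<in>S. y v * q v)"
      unfolding x_def by (simp add: algebra_simps sum_subtractf)
    thus ?thesis using yq yp big by linarith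
  qed
  then obtain v0 where v0: "v0 \<in> S" "x v0 > 0"
  proof -
    assume H: "\<And>v0. v0 \<in> S \<Longrightarrow> 0 < x v0 \<Longrightarrow> thesis"
    show thesis
    proof (rule ccontr)
      assume "\<not> thesis"
      hence "\<forall>v\<in>S. x v \<le> 0" using H by force
      hence "(\<Sum>v\<in>S. y v * x v) \<le> 0" using y0 by (intro sum_nonpos) (simp add: mult_nonneg_nonpos less_imp_le)
      thus False using \<open>(\<Sum>v\<in>S. y v * x v) > 0\<close> by simp
    qed
  qed
  have lower: "spectral_radius_on S A \<ge> s"
    by (rule SR_lower[OF fin _ _ v0(1) _ spos pertp]) (use A0 xp0 v0 in \<open>auto simp: xp_def\<close>)
  show ?thesis using upper lower unfolding S_def A_def s_def by simp
qed



lemma eventually_small: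
  assumes rho1: "(rho::real) > 1" and cc: "cc > 0"
  shows "\<exists>K. \<forall>n\<ge>K. real n / rho ^ n < cc"
proof -
  have "((\<lambda>n. of_nat n / rho ^ n) \<longlongrightarrow> 0) sequentially"
    by (rule lim_n_over_pown) (use rho1 in simp)
  from order_tendstoD(2)[OF this cc] show ?thesis by (simp add: eventually_sequentially)
qed

theorem theorem5p3:
  fixes r :: nat and T :: "nat \<Rightarrow> nat \<Rightarrow> bool"
  assumes "r \<ge> 1"
    and "irreducible01 r T"
    and "PF_eigenvalue r T > 1"
  shows "\<exists>C C' :: real. \<exists>N :: nat. C > 0 \<and> C' > 0 \<and>
    (\<forall>k w1 w2. k \<ge> 1 \<longrightarrow> admissible r T (k + 1) w1 \<longrightarrow> admissible r T (k + 1) w2 \<longrightarrow>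
       d1 r T k w1 \<ge> N \<longrightarrow> d2 r T k w1 w2 \<ge> N \<longrightarrow>
       \<bar>spectral_radius_on (adm_words r T k) (Tk_mat r T k {w1, w2}) - PF_eigenvalue r T\<bar>
         \<le> C * inverse (PF_eigenvalue r T ^ k) *
            (1 + C' * PF_eigenvalue r T ^ delta r T k w1 w2))"
proof -
  define rho where "rho = PF_eigenvalue r T"
  have rho1: "rho > 1" using assms(3) by (simp add: rho_def)
  obtain z z' where zpos: "\<forall>a<r. z a > 0" and z'pos: "\<forall>a<r. z' a > 0"
    and zr: "\<forall>a<r. (\<Sum>b<r. Tm T a b * z b) = rho * z a"
    and zl: "\<forall>b<r. (\<Sum>a<r. z' a * Tm T a b) = rho * z' b"
    using PF_T[OF assms(1,2)] assms(3) unfolding rho_def by force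
  have fr: "finite (z ` {..<r})" "z ` {..<r} \<noteq> {}" "finite (z' ` {..<r})" "z' ` {..<r} \<noteq> {}"
    using assms(1) by (auto simp: lessThan_empty_iff)
  define zmin where "zmin = Min (z ` {..<r})"
  define zmax where "zmax = Max (z ` {..<r})"
  define z'min where "z'min = Min (z' ` {..<r})"
  define z'max where "z'max = Max (z' ` {..<r})"
  have zb: "\<And>a. a < r \<Longrightarrow> zmin \<le> z a \<and> z a \<le> zmax" unfolding zmin_def zmax_def using fr by auto
  have z'b: "\<And>a. a < r \<Longrightarrow> z'min \<le> z' a \<and> z' a \<le> z'max" unfolding z'min_def z'max_def using fr by auto
  have zmin: "zmin > 0" unfolding zmin_def using fr(1,2) zpos by (subst Min_gr_iff) auto
  have z'min: "z'min > 0" unfolding z'min_def using fr(3,4) z'pos by (subst Min_gr_iff) auto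
  have zmax: "zmax > 0" using zb[of 0] zmin assms(1) by auto
  have z'max: "z'max > 0" using z'b[of 0] z'min assms(1) by auto
  define c0 where "c0 = 4 * zmax / zmin"
  have c0: "c0 > 0" using zmax zmin by (simp add: c0_def)
  define cc where "cc = min (rho / (2 * c0)) (zmin * z'min / (8 * rho * zmax * z'max))"
  have cc: "cc > 0" using rho1 c0 zmin z'min zmax z'max by (simp add: cc_def)
  obtain K where K: "\<And>n. n \<ge> K \<Longrightarrow> real n / rho ^ n < cc" using eventually_small[OF rho1 cc] by blast
  define k0 where "k0 = max K 2"
  have large: "\<bar>spectral_radius_on (adm_words r T k) (Tk_mat r T k {w1, w2}) - rho\<bar> \<le> c0 * inverse (rho ^ k)"
    if k: "k \<ge> k0" for k w1 w2
  proof -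
    have kK: "real k / rho ^ k < cc" using K k by (simp add: k0_def)
    have rk: "rho ^ k > 0" using rho1 by simp
    have keps: "real k * (c0 * inverse (rho ^ k)) \<le> rho / 2"
    proof -
      have "real k / rho ^ k < rho / (2 * c0)" using kK by (simp add: cc_def)
      hence "c0 * (real k / rho ^ k) < c0 * (rho / (2 * c0))" using c0 by (rule mult_strict_left_mono)
      also have "\<dots> = rho / 2" using c0 by simp
      also have "c0 * (real k / rho ^ k) = real k * (c0 * inverse (rho ^ k))"
        by (simp add: divide_inverse ac_simps)
      finally show ?thesis by simp
    qed
    have big: "8 * real k * zmax * z'max < zmin * z'min * rho ^ (k - 1)"
    proof -
      define X where "X = 8 * rho * zmax * z'max"
      have X: "X > 0" using rho1 zmax z'max by (simp add: X_def)
      have "real k / rho ^ k < zmin * z'min / X" using kK by (simp add: cc_def X_def)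
      hence "real k < zmin * z'min / X * rho ^ k" using rk by (simp add: divide_less_eq)
      hence "real k * X < zmin * z'min / X * rho ^ k * X" using X by (rule mult_strict_right_mono)
      also have "zmin * z'min / X * rho ^ k * X = zmin * z'min * rho ^ k" using X by simp
      finally have "real k * (8 * rho * zmax * z'max) < zmin * z'min * rho ^ k" by (simp add: X_def)
      moreover have "rho ^ k = rho * rho ^ (k - 1)" using k by (cases k) (auto simp: k0_def)
      ultimately have "rho * (8 * real k * zmax * z'max) < rho * (zmin * z'min * rho ^ (k - 1))"
        by (simp add: algebra_simps)
      thus ?thesis using rho1 by simp
    qed
    have k2: "k \<ge> 2" using k by (simp add: k0_def)
    have epsd: "c0 * inverse (rho ^ k) = 4 * zmax / zmin * inverse (rho ^ k)" by (simp add: c0_def)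
    show ?thesis
      by (rule fixed_k[OF k2 rho1 assms(1) zb zmin z'b z'min zr zl epsd keps big])
  qed
  define B where "B = (\<Sum>k<k0. \<Sum>w1\<in>adm_words r T (k + 1). \<Sum>w2\<in>adm_words r T (k + 1).
      \<bar>spectral_radius_on (adm_words r T k) (Tk_mat r T k {w1, w2}) - rho\<bar> * rho ^ k)"
  have B0: "B \<ge> 0" unfolding B_def using rho1 by (intro sum_nonneg) auto
  define C where "C = c0 + B + 1"
  have C: "C > 0" using c0 B0 by (simp add: C_def)
  show ?thesis
  proof (rule exI[of _ C], rule exI[of _ C], rule exI[of _ "0::nat"], intro conjI allI impI C)
    fix k w1 w2 assume k1: "1 \<le> k" and a1: "admissible r T (k + 1) w1" and a2: "admissible r T (k + 1) w2"
      and "0 \<le> d1 r T k w1" and "0 \<le> d2 r T k w1 w2"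
    let ?D = "\<bar>spectral_radius_on (adm_words r T k) (Tk_mat r T k {w1, w2}) - PF_eigenvalue r T\<bar>"
    have rk: "rho ^ k > 0" using rho1 by simp
    have D: "?D \<le> C * inverse (rho ^ k)"
    proof (cases "k \<ge> k0")
      case True
      have "?D \<le> c0 * inverse (rho ^ k)" using large[OF True] by (simp add: rho_def)
      also have "\<dots> \<le> C * inverse (rho ^ k)" using B0 rk by (intro mult_right_mono) (auto simp: C_def)
      finally show ?thesis .
    next
      case False
      have "?D * rho ^ k \<le> B"
      proof -
        let ?f = "\<lambda>k w1 w2. \<bar>spectral_radius_on (adm_words r T k) (Tk_mat r T k {w1, w2}) - rho\<bar> * rho ^ k"
        have nn: "\<And>k w1 w2. ?f k w1 w2 \<ge> 0" using rho1 by simp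
        have "?f k w1 w2 \<le> (\<Sum>w2\<in>adm_words r T (k + 1). ?f k w1 w2)"
          using a2 by (intro member_le_sum) (auto simp: finite_adm adm_words_mem nn)
        also have "\<dots> \<le> (\<Sum>w1\<in>adm_words r T (k + 1). \<Sum>w2\<in>adm_words r T (k + 1). ?f k w1 w2)"
          using a1 by (intro member_le_sum[where f="\<lambda>w1. \<Sum>w2\<in>adm_words r T (k + 1). ?f k w1 w2"])
            (auto simp: finite_adm adm_words_mem nn intro: sum_nonneg)
        also have "\<dots> \<le> B" unfolding B_def using False
          by (intro member_le_sum[where f="\<lambda>k. \<Sum>w1\<in>adm_words r T (k + 1). \<Sum>w2\<in>adm_words r T (k + 1). ?f k w1 w2"])
            (auto simp: nn intro!: sum_nonneg)
        finally show ?thesis by (simp add: rho_def)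
      qed
      hence "?D \<le> B * inverse (rho ^ k)" using rk by (simp add: field_simps)
      also have "\<dots> \<le> C * inverse (rho ^ k)" using c0 rk by (intro mult_right_mono) (auto simp: C_def)
      finally show ?thesis .
    qed
    have "C * inverse (rho ^ k) \<le> C * inverse (rho ^ k) * (1 + C * rho ^ delta r T k w1 w2)"
    proof -
      have "0 \<le> C * inverse (rho ^ k)" using C rk by simp
      moreover have "1 \<le> 1 + C * rho ^ delta r T k w1 w2" using rho1 C by simp
      ultimately show ?thesis by (metis mult.right_neutral mult_left_mono)
    qed
    thus "?D \<le> C * inverse (PF_eigenvalue r T ^ k) * (1 + C * PF_eigenvalue r T ^ delta r T k w1 w2)"
      using D by (simp add: rho_def)
  qed
qed

end
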